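(* For $n\ge1$ and $k\ge1$, \[\#\{\pi\in\mathcal S_n:\ \mathrm{leaf}(T_\pi)=k\}=\#\{\pi\in\mathcal A^B_n:\ \mathrm{des}_B(\pi)=k-1\}.\]
   Context: $\mathfrak B_n$ is the set of signed permutations $\pi=\pi_1\cdots\pi_n$ (words over $\{\pm1,\dots,\pm n\}$ with $|\pi_1|,\dots,|\pi_n|$ a permutation of $[n]$), compared as integers; set $\pi_0=0$. $\mathrm{des}_B(\pi)=\#\{i\in\{0,\dots,n-1\}:\pi_i>\pi_{i+1}\}$. The set of snakes is $\mathcal S_n=\{\pi\in\mathfrak B_n: 0<\pi_1>\pi_2<\pi_3>\pi_4<\cdots\}$ (i.e. $\pi_1>0$ and $\pi_i>\pi_{i+1}$ for odd $i$, $\pi_i<\pi_{i+1}$ for even $i$, $1\le i\le n-1$). Trees are rooted binary trees with each child designated left or right. A min–max tree is labeled bijectively by a totally ordered set so that each node's label is the minimum or maximum of its subtree's labels. A node with a child is inner; an inner node is a min-node (resp. max-node) if its label is the minimum (resp. maximum) of its subtree. An HR-tree is a min–max tree in which every inner node $s$ has a nonempty right subtree containing the maximum label of the subtree of $s$ if $s$ is a min-node, the minimum if $s$ is a max-node. The reading word is the in-order reading $w(T)=w(L)\,\ell_{\mathrm{root}}\,w(R)$. $T_\pi$ is the unique HR-tree with label set $\{0,\pi_1,\dots,\pi_n\}$ whose reading word is $0\pi_1\cdots\pi_n$; $\mathrm{leaf}(T)$ is its number of leaves (node $0$ included if a leaf). For an index $i\in[n]$, the $\pi_i$-factorization of the word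 $0\pi_1\cdots\pi_n$ is $w_1w_2\pi_iw_4w_5$ where $w_2$ (resp. $w_4$) is the longest factor ending just before (resp. starting just after) $\pi_i$ all of whose letters exceed $\pi_i$. $\mathcal A^B_n$ is the set of type B André permutations: $\pi\in\mathfrak B_n$ such that (i) no $i\in\{1,\dots,n-1\}$ has $\pi_{i-1}>\pi_i>\pi_{i+1}$, (ii) $\pi_{n-1}<\pi_n$, (iii) for every $i\in\{1,\dots,n-1\}$ with $\pi_{i-1}>\pi_i<\pi_{i+1}$, $\max(w_2)<\max(w_4)$ in the $\pi_i$-factorization. *)

theory Defs
  imports Main "HOL-Library.Tree"
begin

definition signed_perms :: "nat \<Rightarrow> int list set" where
  "signed_perms n = {w. length w = n \<and> distinct (map abs w) \<and> set (map abs w) = {1..int n}}"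

definition desB :: "int list \<Rightarrow> nat" where
  "desB w = card {i. i < length w \<and> (0 # w) ! i > (0 # w) ! (Suc i)}"

definition snakes :: "nat \<Rightarrow> int list set" where
  "snakes n = {w \<in> signed_perms n. \<forall>i < n.
      (if even i then (0 # w) ! i < (0 # w) ! Suc i else (0 # w) ! i > (0 # w) ! Suc i)}"

(* trees: 'a tree from HOL-Library.Tree, Leaf = empty tree *)
definition inner_node :: "'a tree \<Rightarrow> bool" where
  "inner_node t \<longleftrightarrow> (\<exists>l a r. t = Node l a r \<and> (l \<noteq> Leaf \<or> r \<noteq> Leaf))"

definition minmax_tree :: "int tree \<Rightarrow> bool" where
  "minmax_tree t \<longleftrightarrow> distinct (inorder t) \<and>
     (\<forall>l a r. Node l a r \<in> subtrees t \<longrightarrow>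
        a = Min (set_tree (Node l a r)) \<or> a = Max (set_tree (Node l a r)))"

definition hr_tree :: "int tree \<Rightarrow> bool" where
  "hr_tree t \<longleftrightarrow> minmax_tree t \<and>
     (\<forall>l a r. Node l a r \<in> subtrees t \<longrightarrow> inner_node (Node l a r) \<longrightarrow>
        r \<noteq> Leaf \<and>
        (a = Min (set_tree (Node l a r)) \<longrightarrow> Max (set_tree (Node l a r)) \<in> set_tree r) \<and>
        (a = Max (set_tree (Node l a r)) \<longrightarrow> Min (set_tree (Node l a r)) \<in> set_tree r))"

fun leaf_count :: "'a tree \<Rightarrow> nat" where
  "leaf_count Leaf = 0"
| "leaf_count (Node l a r) = (if l = Leaf \<and> r = Leaf then 1 else leaf_count l + leaf_count r)"

definition T_pi :: "int list \<Rightarrow> int tree" where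
  "T_pi w = (THE t. hr_tree t \<and> inorder t = 0 # w)"

(* pi_i-factorization of the word p = 0 pi_1 ... pi_n at position i: the factors w2 and w4 *)
definition fact_w2 :: "int list \<Rightarrow> nat \<Rightarrow> int list" where
  "fact_w2 p i = rev (takeWhile (\<lambda>x. x > p ! i) (rev (take i p)))"

definition fact_w4 :: "int list \<Rightarrow> nat \<Rightarrow> int list" where
  "fact_w4 p i = takeWhile (\<lambda>x. x > p ! i) (drop (Suc i) p)"

definition andreB :: "nat \<Rightarrow> int list set" where
  "andreB n = {w \<in> signed_perms n. let p = 0 # w in
      (\<forall>i \<in> {1..n-1}. \<not> (p ! (i-1) > p ! i \<and> p ! i > p ! Suc i)) \<and>
      p ! (n-1) < p ! n \<and>
      (\<forall>i \<in> {1..n-1}. p ! (i-1) > p ! i \<and> p ! i < p ! Suc i \<longrightarrow>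
          Max (set (fact_w2 p i)) < Max (set (fact_w4 p i)))}"

end

theory Submission
  imports Defs
begin

definition spl :: "int list \<Rightarrow> nat" where
  "spl u = (LEAST i. i < length u \<and> (u!i = Min (set u) \<or> u!i = Max (set u)))"

lemma spl_props:
  assumes "u \<noteq> []"
  shows "spl u < length u" "u ! spl u = Min (set u) \<or> u ! spl u = Max (set u)"
    "\<And>i. i < spl u \<Longrightarrow> u!i \<noteq> Min (set u) \<and> u!i \<noteq> Max (set u)"
proof -
  obtain i where i: "i < length u" "u!i = Min (set u)"
    using assms by (metis Min_in List.finite_set in_set_conv_nth set_empty)
  let ?P = "\<lambda>i. i < length u \<and> (u!i = Min (set u) \<or> u!i = Max (set u))"
  have P: "?P i" using i by auto
  show "spl u < length u" "u ! spl u = Min (set u) \<or> u ! spl u = Max (set u)"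
    using LeastI[of ?P i, OF P] unfolding spl_def by auto
  fix j assume "j < spl u"
  then show "u!j \<noteq> Min (set u) \<and> u!j \<noteq> Max (set u)"
    using not_less_Least[of j ?P] LeastI[of ?P i, OF P] unfolding spl_def by auto
qed

lemma spl_eqI:
  assumes "j < length u" "u!j = Min (set u) \<or> u!j = Max (set u)"
    "\<And>i. i < j \<Longrightarrow> u!i \<noteq> Min (set u) \<and> u!i \<noteq> Max (set u)"
  shows "spl u = j"
  unfolding spl_def
  apply (rule Least_equality)
  using assms(1,2) apply blast
  using assms(3) by (metis not_le)

function hr :: "int list \<Rightarrow> int tree" where
  "hr u = (if u = [] then Leaf else
     Node (hr (take (spl u) u)) (u ! spl u) (hr (drop (Suc (spl u)) u)))"
  by auto
termination
  apply (relation "measure length")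
  using spl_props(1) by auto

declare hr.simps[simp del]

lemma hr_Nil[simp]: "hr [] = Leaf" by (simp add: hr.simps)

lemma hr_eq_Leaf[simp]: "hr u = Leaf \<longleftrightarrow> u = []"
  by (subst hr.simps) auto

lemma inorder_hr: "inorder (hr u) = u"
proof (induction u rule: hr.induct)
  case (1 u)
  show ?case
  proof (cases "u = []")
    case False
    then show ?thesis using 1 spl_props(1)[OF False]
      by (subst hr.simps) (simp add: id_take_nth_drop[symmetric])
  qed simp
qed

definition Qn :: "int tree \<Rightarrow> int \<Rightarrow> int tree \<Rightarrow> bool" where
  "Qn l a r \<longleftrightarrow> (a = Min (set_tree (Node l a r)) \<or> a = Max (set_tree (Node l a r))) \<and>
     (inner_node (Node l a r) \<longrightarrow>
        r \<noteq> Leaf \<and>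
        (a = Min (set_tree (Node l a r)) \<longrightarrow> Max (set_tree (Node l a r)) \<in> set_tree r) \<and>
        (a = Max (set_tree (Node l a r)) \<longrightarrow> Min (set_tree (Node l a r)) \<in> set_tree r))"

lemma hr_tree_alt: "hr_tree t \<longleftrightarrow> distinct (inorder t) \<and>
   (\<forall>l a r. Node l a r \<in> subtrees t \<longrightarrow> Qn l a r)"
  unfolding hr_tree_def minmax_tree_def Qn_def by blast

lemma all_sub_Node: "(\<forall>l' a' r'. Node l' a' r' \<in> subtrees (Node l a r) \<longrightarrow> P l' a' r') \<longleftrightarrow>
   P l a r \<and> (\<forall>l' a' r'. Node l' a' r' \<in> subtrees l \<longrightarrow> P l' a' r') \<and>
   (\<forall>l' a' r'. Node l' a' r' \<in> subtrees r \<longrightarrow> P l' a' r')"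
  by auto

lemma hr_tree_Leaf[simp]: "hr_tree Leaf"
  unfolding hr_tree_alt by simp

lemma hr_tree_Node:
  "hr_tree (Node l a r) \<longleftrightarrow> distinct (inorder l @ a # inorder r) \<and> Qn l a r \<and>
     hr_tree l \<and> hr_tree r"
  unfolding hr_tree_alt all_sub_Node by auto

lemma in_take_nth: "y \<in> set (take j u) \<Longrightarrow> \<exists>i<j. i < length u \<and> u!i = y"
  by (auto simp: in_set_conv_nth)

lemma set_tree_hr[simp]: "set_tree (hr u) = set u"
  by (metis inorder_hr set_inorder)

lemma hr_Cons_eq: "u \<noteq> [] \<Longrightarrow>
  hr u = Node (hr (take (spl u) u)) (u ! spl u) (hr (drop (Suc (spl u)) u))"
  using hr.simps[of u] by (simp only: if_False simp_thms)

lemma hr_is_hr: "distinct u \<Longrightarrow> hr_tree (hr u)"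
proof (induction u rule: hr.induct)
  case (1 u)
  show ?case
  proof (cases "u = []")
    case True then show ?thesis by simp
  next
    case False
    define j where "j = spl u"
    define L where "L = take j u"
    define R where "R = drop (Suc j) u"
    define x where "x = u ! j"
    have j: "j < length u" using spl_props(1)[OF False] j_def by simp
    have u: "u = L @ x # R" unfolding L_def R_def x_def using j by (simp add: id_take_nth_drop[symmetric])
    have hu: "hr u = Node (hr L) x (hr R)" unfolding L_def R_def x_def j_def
      using hr_Cons_eq[OF False] .
    have dL: "distinct L" "distinct R" using 1(3) unfolding L_def R_def by simp_all
    have IH1: "hr_tree (hr L)" using 1(1)[OF False] dL unfolding L_def j_def by blast
    have IH2: "hr_tree (hr R)" using 1(2)[OF False] dL unfolding R_def j_def by blast
    have st: "set_tree (Node (hr L) x (hr R)) = set u"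
      using u by simp
    have xmm: "x = Min (set u) \<or> x = Max (set u)" using spl_props(2)[OF False] x_def j_def by simp
    have notL: "y \<noteq> Min (set u) \<and> y \<noteq> Max (set u)" if yL: "y \<in> set L" for y
    proof -
      obtain i where i: "i < j" "u!i = y" using in_take_nth[of y j u] yL L_def by blast
      show ?thesis using spl_props(3)[OF False, of i] i j_def by simp
    qed
    have fin: "finite (set u)" by simp
    have xL: "x \<notin> set L" using 1(3) u by simp
    have xR: "x \<notin> set R" using 1(3) u by simp
    have key: "R \<noteq> [] \<and> (x = Min (set u) \<longrightarrow> Max (set u) \<in> set R) \<and> (x = Max (set u) \<longrightarrow> Min (set u) \<in> set R)"
      if ne: "L \<noteq> [] \<or> R \<noteq> []"
    proof -
      obtain y where y: "y \<in> set u" "y \<noteq> x"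
      proof (cases "L = []")
        case True
        then have "hd R \<in> set u" "hd R \<noteq> x" using ne u xR by auto
        then show ?thesis using that by blast
      next
        case False
        then have "hd L \<in> set u" "hd L \<noteq> x" using u xL by auto
        then show ?thesis using that by blast
      qed
      have MinMax: "Min (set u) \<noteq> Max (set u)"
      proof
        assume eq: "Min (set u) = Max (set u)"
        have all: "z = Min (set u)" if z: "z \<in> set u" for z
        proof -
          have "Min (set u) \<le> z" using fin z by simp
          moreover have "z \<le> Max (set u)" using fin z by simp
          ultimately show ?thesis using eq by simp
        qed
        have "x \<in> set u" using u by simp
        then show False using all[of x] all[of y] y by simp
      qed
      have Minin: "Min (set u) \<in> set u" "Max (set u) \<in> set u" using False by simp_all
      have inR: "\<And>z. z \<in> set u \<Longrightarrow> z \<noteq> x \<Longrightarrow> z \<notin> set L \<Longrightarrow> z \<in> set R" using u by auto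
      have c1: "x = Min (set u) \<longrightarrow> Max (set u) \<in> set R"
        using inR[OF Minin(2)] MinMax notL by metis
      have c2: "x = Max (set u) \<longrightarrow> Min (set u) \<in> set R"
        using inR[OF Minin(1)] MinMax notL by metis
      have "R \<noteq> []" using c1 c2 xmm by auto
      then show ?thesis using c1 c2 by blast
    qed
    have inn: "inner_node (Node (hr L) x (hr R)) \<Longrightarrow> L \<noteq> [] \<or> R \<noteq> []"
      unfolding inner_node_def by auto
    have Qn: "Qn (hr L) x (hr R)"
      unfolding Qn_def st using key inn xmm by (simp (no_asm)) blast
    have "distinct (inorder (hr L) @ x # inorder (hr R))" using 1(3) u by (simp add: inorder_hr)
    then show ?thesis unfolding hu hr_tree_Node
      using IH1 IH2 Qn by blast
  qed
qed

lemma hr_unique: "hr_tree t \<Longrightarrow> hr (inorder t) = t"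
proof (induction t)
  case Leaf then show ?case by simp
next
  case (Node l a r)
  let ?u = "inorder l @ a # inorder r"
  have H: "distinct ?u" "Qn l a r" "hr_tree l" "hr_tree r" using Node.prems hr_tree_Node by auto
  have st: "set_tree (Node l a r) = set ?u" by auto
  have j: "spl ?u = length (inorder l)"
  proof (rule spl_eqI)
    show "length (inorder l) < length ?u" by simp
    show "?u ! length (inorder l) = Min (set ?u) \<or> ?u ! length (inorder l) = Max (set ?u)"
      using H(2) st unfolding Qn_def by (simp add: nth_append)
    fix i assume i: "i < length (inorder l)"
    then have "?u ! i = inorder l ! i" by (simp add: nth_append)
    then have ui: "?u ! i \<in> set (inorder l)" using i by (metis nth_mem length_inorder)
    then have lne: "l \<noteq> Leaf" by auto
    then have inn: "inner_node (Node l a r)" unfolding inner_node_def by auto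
    have d: "distinct ?u" by (fact H(1))
    have nota: "?u ! i \<noteq> a" using d ui by auto
    have notr: "?u ! i \<notin> set (inorder r)" using d ui by auto
    show "?u ! i \<noteq> Min (set ?u) \<and> ?u ! i \<noteq> Max (set ?u)"
      using H(2) inn st nota notr unfolding Qn_def by (metis set_inorder)
  qed
  have "hr ?u = Node (hr (take (spl ?u) ?u)) (?u ! spl ?u) (hr (drop (Suc (spl ?u)) ?u))"
    by (rule hr_Cons_eq) simp
  also have "\<dots> = Node l a r" using j Node.IH H by (simp add: nth_append)
  finally show ?case by simp
qed

lemma T_pi_hr: "distinct (0 # w) \<Longrightarrow> T_pi w = hr (0 # w)"
  unfolding T_pi_def
  apply (rule the_equality)
  using hr_is_hr inorder_hr apply blast
  using hr_unique by metis

definition ordp :: "(int \<Rightarrow> int) \<Rightarrow> int set \<Rightarrow> bool" where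
  "ordp h S \<longleftrightarrow> (\<forall>x\<in>S. \<forall>y\<in>S. x < y \<longrightarrow> h x < h y) \<or> (\<forall>x\<in>S. \<forall>y\<in>S. x < y \<longrightarrow> h y < h x)"

lemma ordp_subset: "ordp h S \<Longrightarrow> T \<subseteq> S \<Longrightarrow> ordp h T"
  unfolding ordp_def by blast

lemma ordp_inj: "ordp h S \<Longrightarrow> inj_on h S"
  unfolding ordp_def inj_on_def by (metis less_irrefl linorder_neqE)

lemma ordp_ext:
  assumes "ordp h S" "finite S" "S \<noteq> {}" "x \<in> S"
  shows "(h x = Min (h ` S) \<or> h x = Max (h ` S)) \<longleftrightarrow> (x = Min S \<or> x = Max S)"
proof -
  have inj: "inj_on h S" using ordp_inj assms(1) .
  have mS: "Min S \<in> S" "Max S \<in> S" using assms by auto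
  have fin: "finite (h ` S)" "h ` S \<noteq> {}" using assms by auto
  have hx: "h x = h y \<longleftrightarrow> x = y" if "y \<in> S" for y using inj assms(4) that inj_on_eq_iff by metis
  consider "\<forall>x\<in>S. \<forall>y\<in>S. x < y \<longrightarrow> h x < h y" | "\<forall>x\<in>S. \<forall>y\<in>S. x < y \<longrightarrow> h y < h x"
    using assms(1) unfolding ordp_def by blast
  then show ?thesis
  proof cases
    case 1
    have "\<forall>y\<in>S. h (Min S) \<le> h y" using 1 mS assms(2)
      by (metis Min_le le_less order_refl)
    then have a: "Min (h ` S) = h (Min S)" using fin mS
      by (intro Min_eqI) auto
    have "\<forall>y\<in>S. h y \<le> h (Max S)" using 1 mS assms(2)
      by (metis Max_ge le_less order_refl)
    then have b: "Max (h ` S) = h (Max S)" using fin mS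
      by (intro Max_eqI) auto
    show ?thesis unfolding a b using hx mS by blast
  next
    case 2
    have "\<forall>y\<in>S. h (Max S) \<le> h y" using 2 mS assms(2)
      by (metis Max_ge le_less order_refl)
    then have a: "Min (h ` S) = h (Max S)" using fin mS
      by (intro Min_eqI) auto
    have "\<forall>y\<in>S. h y \<le> h (Min S)" using 2 mS assms(2)
      by (metis Min_le le_less order_refl)
    then have b: "Max (h ` S) = h (Min S)" using fin mS
      by (intro Max_eqI) auto
    show ?thesis unfolding a b using hx mS by blast
  qed
qed

lemma spl_map:
  assumes "u \<noteq> []" "ordp h (set u)"
  shows "spl (map h u) = spl u"
proof (rule spl_eqI)
  have e: "\<And>i. i < length u \<Longrightarrow> (map h u ! i = Min (set (map h u)) \<or> map h u ! i = Max (set (map h u)))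
     \<longleftrightarrow> (u ! i = Min (set u) \<or> u ! i = Max (set u))"
    using ordp_ext[OF assms(2)] assms(1) by simp
  show "spl u < length (map h u)" using spl_props(1)[OF assms(1)] by simp
  show "map h u ! spl u = Min (set (map h u)) \<or> map h u ! spl u = Max (set (map h u))"
    using e spl_props(1,2)[OF assms(1)] by blast
  fix i assume "i < spl u"
  then show "map h u ! i \<noteq> Min (set (map h u)) \<and> map h u ! i \<noteq> Max (set (map h u))"
    using e spl_props(1,3)[OF assms(1)] by (meson order.strict_trans)
qed

lemma hr_map: "ordp h (set u) \<Longrightarrow> hr (map h u) = map_tree h (hr u)"
proof (induction u rule: hr.induct)
  case (1 u)
  show ?case
  proof (cases "u = []")
    case True then show ?thesis by simp
  next
    case False
    have j: "spl (map h u) = spl u" using spl_map[OF False 1(3)] .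
    have o1: "ordp h (set (take (spl u) u))" "ordp h (set (drop (Suc (spl u)) u))"
      using 1(3) ordp_subset set_take_subset set_drop_subset by metis+
    have lt: "spl u < length u" using spl_props(1)[OF False] .
    have "hr (map h u) = Node (hr (take (spl u) (map h u))) (map h u ! spl u) (hr (drop (Suc (spl u)) (map h u)))"
      using hr_Cons_eq[of "map h u"] False j by simp
    also have "\<dots> = Node (hr (map h (take (spl u) u))) (h (u ! spl u)) (hr (map h (drop (Suc (spl u)) u)))"
      using lt by (simp add: take_map drop_map)
    also have "\<dots> = Node (map_tree h (hr (take (spl u) u))) (h (u ! spl u)) (map_tree h (hr (drop (Suc (spl u)) u)))"
      using 1(1)[OF False o1(1)] 1(2)[OF False o1(2)] by simp
    also have "\<dots> = map_tree h (hr u)" using hr_Cons_eq[OF False] by simp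
    finally show ?thesis .
  qed
qed

lemma lc_map_tree[simp]: "leaf_count (map_tree h t) = leaf_count t"
  by (induction t) auto

lemma lc_hr_map: "ordp h (set u) \<Longrightarrow> leaf_count (hr (map h u)) = leaf_count (hr u)"
  using hr_map by simp

definition alt :: "bool \<Rightarrow> int list \<Rightarrow> bool" where
  "alt b u \<longleftrightarrow> (\<forall>i. Suc i < length u \<longrightarrow> (if even i = b then u!i < u!Suc i else u!Suc i < u!i))"

lemma alt_map_mono:
  assumes "\<forall>x\<in>set u. \<forall>y\<in>set u. x < y \<longrightarrow> h x < h y"
  shows "alt b (map h u) = alt b u"
proof -
  have "\<And>i j. i < length u \<Longrightarrow> j < length u \<Longrightarrow> h (u!i) < h (u!j) \<longleftrightarrow> u!i < u!j"
    using assms by (metis nth_mem not_less_iff_gr_or_eq less_irrefl)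
  then show ?thesis unfolding alt_def by auto
qed

lemma alt_uminus: "alt b (map uminus u) = alt (\<not> b) u"
  unfolding alt_def by auto

definition arr :: "int set \<Rightarrow> int list set" where
  "arr S = {u. distinct u \<and> set u = S}"

lemma arr_iff[simp]: "u \<in> arr S \<longleftrightarrow> distinct u \<and> set u = S"
  unfolding arr_def by simp

lemma finite_arr: "finite S \<Longrightarrow> finite (arr S)"
proof -
  assume f: "finite S"
  have "arr S \<subseteq> {xs. set xs \<subseteq> S \<and> length xs = card S}"
    using distinct_card by fastforce
  then show ?thesis using finite_lists_length_eq[OF f] finite_subset by blast
qed

lemma card_transfer:
  assumes bij: "bij_betw h S S'" and Q: "\<And>u. u \<in> arr S \<Longrightarrow> Q' (map h u) = Q u"
  shows "card {u \<in> arr S. Q u} = card {v \<in> arr S'. Q' v}"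
proof -
  have inj: "inj_on h S" using bij bij_betw_def by blast
  have injm: "inj_on (map h) {u \<in> arr S. Q u}"
    by (rule inj_on_mapI) (use inj in \<open>auto simp: inj_on_def\<close>)
  define g where "g = the_inv_into S h"
  have bg: "bij_betw g S' S" using bij_betw_the_inv_into[OF bij] g_def by simp
  have hg: "\<And>y. y \<in> S' \<Longrightarrow> h (g y) = y" using f_the_inv_into_f_bij_betw[OF bij] g_def by blast
  have "map h ` {u \<in> arr S. Q u} = {v \<in> arr S'. Q' v}"
  proof (intro equalityI subsetI)
    fix v assume "v \<in> map h ` {u \<in> arr S. Q u}"
    then obtain u where u: "u \<in> arr S" "Q u" "v = map h u" by blast
    have "distinct v" using u inj by (simp add: distinct_map)
    moreover have "set v = S'" using u bij by (simp add: bij_betw_def)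
    ultimately show "v \<in> {v \<in> arr S'. Q' v}" using Q u by simp
  next
    fix v assume v: "v \<in> {v \<in> arr S'. Q' v}"
    define u where "u = map g v"
    have ig: "inj_on g S'" using bg bij_betw_def by blast
    have "distinct u" using v ig by (simp add: u_def distinct_map)
    moreover have "set u = S" using v bg by (simp add: u_def bij_betw_def)
    moreover have mu: "map h u = v" unfolding u_def map_map by (rule map_idI) (use v hg in auto)
    ultimately have uS: "u \<in> arr S" by simp
    then have "Q u" using Q[OF uS] v mu by simp
    then show "v \<in> map h ` {u \<in> arr S. Q u}" using mu uS by blast
  qed
  then show ?thesis using card_image[OF injm] by simp
qed

lemma mono_bij_exists:
  "finite (S::int set) \<Longrightarrow> finite (S'::int set) \<Longrightarrow> card S = card S' \<Longrightarrow>
   \<exists>h. bij_betw h S S' \<and> (\<forall>x\<in>S. \<forall>y\<in>S. x < y \<longrightarrow> h x < h y)"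
proof (induction "card S" arbitrary: S S')
  case 0
  then show ?case by (auto simp: bij_betw_def)
next
  case (Suc n)
  then have ne: "S \<noteq> {}" "S' \<noteq> {}" by auto
  define M where "M = Max S"
  define M' where "M' = Max S'"
  define S0 where "S0 = S - {M}"
  define S0' where "S0' = S' - {M'}"
  have MS: "M \<in> S" "M' \<in> S'" using ne Suc.prems M_def M'_def by auto
  have c: "card S0 = n" "card S0' = n" using Suc MS S0_def S0'_def by auto
  obtain h0 where h0: "bij_betw h0 S0 S0'" "\<forall>x\<in>S0. \<forall>y\<in>S0. x < y \<longrightarrow> h0 x < h0 y"
    using Suc.hyps(1)[of S0 S0'] c Suc.prems S0_def S0'_def by auto
  define h where "h = h0(M := M')"
  have hS0: "\<And>x. x \<in> S0 \<Longrightarrow> h x = h0 x" using S0_def h_def by auto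
  have lt0: "\<And>x. x \<in> S0 \<Longrightarrow> x < M" using S0_def M_def Suc.prems(1)
    by (metis DiffE Max_ge insertCI order_le_neq_trans)
  have lt0': "\<And>x. x \<in> S0' \<Longrightarrow> x < M'" using S0'_def M'_def Suc.prems(2)
    by (metis DiffE Max_ge insertCI order_le_neq_trans)
  have S: "S = insert M S0" "S' = insert M' S0'" using MS S0_def S0'_def by auto
  have img: "h ` S0 = S0'" using h0(1) hS0 by (simp add: bij_betw_def)
  have "inj_on h S0" using h0(1) hS0 by (simp add: bij_betw_def inj_on_def)
  moreover have "M' \<notin> h ` S0" using img S0'_def by simp
  moreover have hM: "h M = M'" by (simp add: h_def)
  moreover have MS0: "M \<notin> S0" using S0_def by simp
  ultimately have "inj_on h (insert M S0)" by simp
  moreover have "h ` insert M S0 = insert M' S0'" using img hM by simp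
  ultimately have "bij_betw h S S'" unfolding S bij_betw_def by blast
  moreover have "\<forall>x\<in>S. \<forall>y\<in>S. x < y \<longrightarrow> h x < h y"
  proof (intro ballI impI)
    fix x y assume xy: "x \<in> S" "y \<in> S" "x < y"
    show "h x < h y"
    proof (cases "y = M")
      case True
      then have "x \<in> S0" using xy S0_def by auto
      then show ?thesis using True hS0 h0(1) lt0' h_def by (auto simp: bij_betw_def)
    next
      case False
      then have "y \<in> S0" "x \<in> S0" using xy S0_def lt0 by (auto, metis DiffI less_asym lt0 singletonD)
      then show ?thesis using hS0 h0(2) xy by auto
    qed
  qed
  ultimately show ?case by blast
qed

definition FU :: "int set \<Rightarrow> nat \<Rightarrow> nat" where
  "FU S k = card {u \<in> arr S. alt True u \<and> leaf_count (hr u) = k}"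

lemma FU_card:
  assumes "finite S" "finite S'" "card S = card S'"
  shows "FU S k = FU S' k"
proof -
  obtain h where h: "bij_betw h S S'" "\<forall>x\<in>S. \<forall>y\<in>S. x < y \<longrightarrow> h x < h y"
    using mono_bij_exists[OF assms] by blast
  show ?thesis unfolding FU_def
  proof (rule card_transfer[OF h(1)])
    fix u assume u: "u \<in> arr S"
    have o: "ordp h (set u)" using u h(2) unfolding ordp_def by simp
    show "(alt True (map h u) \<and> leaf_count (hr (map h u)) = k) = (alt True u \<and> leaf_count (hr u) = k)"
      using alt_map_mono[of u h] lc_hr_map[OF o] u h(2) by simp
  qed
qed

lemma FD_FU:
  assumes "finite S"
  shows "card {u \<in> arr S. alt False u \<and> leaf_count (hr u) = k} = FU S k"
proof -
  have b: "bij_betw uminus S (uminus ` S)" by (simp add: bij_betw_def inj_on_def)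
  have "card {u \<in> arr S. alt False u \<and> leaf_count (hr u) = k} = FU (uminus ` S) k"
    unfolding FU_def
  proof (rule card_transfer[OF b])
    fix u assume u: "u \<in> arr S"
    have o: "ordp uminus (set u)" unfolding ordp_def by simp
    show "(alt True (map uminus u) \<and> leaf_count (hr (map uminus u)) = k) =
          (alt False u \<and> leaf_count (hr u) = k)"
      using alt_uminus[of True u] lc_hr_map[OF o] by simp
  qed
  also have "\<dots> = FU S k"
    by (rule FU_card) (use assms in \<open>auto simp: card_image inj_on_def\<close>)
  finally show ?thesis .
qed

definition step :: "bool \<Rightarrow> nat \<Rightarrow> int \<Rightarrow> int \<Rightarrow> bool" where
  "step b i x y \<longleftrightarrow> (if even i = b then x < y else y < x)"

lemma alt_step: "alt b u \<longleftrightarrow> (\<forall>i. Suc i < length u \<longrightarrow> step b i (u!i) (u!Suc i))"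
  unfolding alt_def step_def by simp

lemma alt_Nil[simp]: "alt b []" and alt_one[simp]: "alt b [x]"
  unfolding alt_def by auto

lemma all_nat_split: "(\<forall>i::nat. P i) \<longleftrightarrow> P 0 \<and> (\<forall>i. P (Suc i))"
  by (metis not0_implies_Suc)

lemma alt_Cons2: "alt b (x # y # r) \<longleftrightarrow> (if b then x < y else y < x) \<and> alt (\<not> b) (y # r)"
  unfolding alt_def
  apply (subst all_nat_split)
  by auto

lemma alt_append_iff:
  "alt b (xs @ ys) \<longleftrightarrow> alt b xs \<and> alt (b = even (length xs)) ys \<and>
     (xs \<noteq> [] \<longrightarrow> ys \<noteq> [] \<longrightarrow> step b (length xs - 1) (last xs) (hd ys))"
proof (induction xs arbitrary: b)
  case Nil then show ?case by simp
next
  case (Cons y xs)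
  show ?case
  proof (cases xs)
    case Nil
    then show ?thesis
      by (cases ys) (auto simp: alt_Cons2 step_def)
  next
    case (Cons z r)
    have "alt b ((y # xs) @ ys) \<longleftrightarrow> (if b then y < z else z < y) \<and> alt (\<not> b) (xs @ ys)"
      using Cons by (simp add: alt_Cons2)
    also have "\<dots> \<longleftrightarrow> (if b then y < z else z < y) \<and> alt (\<not> b) xs \<and> alt ((\<not> b) = even (length xs)) ys \<and>
     (xs \<noteq> [] \<longrightarrow> ys \<noteq> [] \<longrightarrow> step (\<not> b) (length xs - 1) (last xs) (hd ys))"
      using Cons.IH by simp
    also have "\<dots> \<longleftrightarrow> alt b (y # xs) \<and> alt (b = even (length (y # xs))) ys \<and>
     (y # xs \<noteq> [] \<longrightarrow> ys \<noteq> [] \<longrightarrow> step b (length (y # xs) - 1) (last (y # xs)) (hd ys))"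
      using Cons by (auto simp: alt_Cons2 step_def)
    finally show ?thesis .
  qed
qed

lemma alt_Cons_iff: "alt b (x # ys) \<longleftrightarrow> alt (\<not> b) ys \<and> (ys \<noteq> [] \<longrightarrow> (if b then x < hd ys else hd ys < x))"
  by (cases ys) (auto simp: alt_Cons2)

lemma split_first:
  assumes "xs @ x # ys = xs' @ x' # ys'" "x \<in> Z" "x' \<in> Z" "set xs \<inter> Z = {}" "set xs' \<inter> Z = {}"
  shows "xs = xs' \<and> x = x' \<and> ys = ys'"
  using assms
proof (induction xs arbitrary: xs')
  case Nil
  then show ?case by (cases xs') auto
next
  case (Cons a xs)
  then show ?case by (cases xs') auto
qed

lemma card_decomp:
  fixes phi :: "int list \<times> int list \<Rightarrow> int list" and wX wY :: "int list \<Rightarrow> nat" and k :: nat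
  assumes fA: "finite AA"
    and fX: "\<And>A. A \<in> AA \<Longrightarrow> finite (XX A)" and fY: "\<And>A. A \<in> AA \<Longrightarrow> finite (YY A)"
    and XA: "\<And>A L. A \<in> AA \<Longrightarrow> L \<in> XX A \<Longrightarrow> set L = A"
    and inj: "inj_on phi {(L,R). \<exists>A\<in>AA. L \<in> XX A \<and> R \<in> YY A}"
    and T: "T = phi ` {(L,R). (\<exists>A\<in>AA. L \<in> XX A \<and> R \<in> YY A) \<and> wX L + wY R = k}"
  shows "card T = (\<Sum>A\<in>AA. \<Sum>k1\<le>k. card {L \<in> XX A. wX L = k1} * card {R \<in> YY A. wY R = k - k1})"
proof -
  let ?P = "{(L,R). (\<exists>A\<in>AA. L \<in> XX A \<and> R \<in> YY A) \<and> wX L + wY R = k}"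
  let ?Q = "\<lambda>A k1. {L \<in> XX A. wX L = k1} \<times> {R \<in> YY A. wY R = k - k1}"
  have inj': "inj_on phi ?P" using inj by (rule inj_on_subset) auto
  have "card T = card ?P" using T card_image[OF inj'] by simp
  also have "?P = (\<Union>A\<in>AA. \<Union>k1\<in>{..k}. ?Q A k1)"
  proof (intro equalityI subsetI)
    fix p assume "p \<in> ?P"
    then obtain L R A where p: "p = (L,R)" "A \<in> AA" "L \<in> XX A" "R \<in> YY A" "wX L + wY R = k" by blast
    then show "p \<in> (\<Union>A\<in>AA. \<Union>k1\<in>{..k}. ?Q A k1)"
      by (intro UN_I[of A]) (auto intro!: UN_I[of "wX L"])
  next
    fix p assume "p \<in> (\<Union>A\<in>AA. \<Union>k1\<in>{..k}. ?Q A k1)"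
    then obtain L R A k1 where p: "p = (L,R)" "A \<in> AA" "L \<in> XX A" "R \<in> YY A" "wX L = k1" "k1 \<le> k" "wY R = k - k1" by blast
    then show "p \<in> ?P" by auto
  qed
  also have "card \<dots> = (\<Sum>A\<in>AA. card (\<Union>k1\<in>{..k}. ?Q A k1))"
  proof (rule card_UN_disjoint[OF fA])
    show "\<forall>A\<in>AA. finite (\<Union>k1\<in>{..k}. ?Q A k1)" using fX fY by auto
    show "\<forall>A\<in>AA. \<forall>B\<in>AA. A \<noteq> B \<longrightarrow> (\<Union>k1\<in>{..k}. ?Q A k1) \<inter> (\<Union>k1\<in>{..k}. ?Q B k1) = {}"
      using XA by blast
  qed
  also have "\<dots> = (\<Sum>A\<in>AA. \<Sum>k1\<le>k. card (?Q A k1))"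
  proof (rule sum.cong[OF refl])
    fix A assume A: "A \<in> AA"
    show "card (\<Union>k1\<in>{..k}. ?Q A k1) = (\<Sum>k1\<le>k. card (?Q A k1))"
      by (rule card_UN_disjoint) (use fX[OF A] fY[OF A] in auto)
  qed
  also have "\<dots> = (\<Sum>A\<in>AA. \<Sum>k1\<le>k. card {L \<in> XX A. wX L = k1} * card {R \<in> YY A. wY R = k - k1})"
    by (simp add: card_cartesian_product)
  finally show ?thesis .
qed

lemma hr_split:
  assumes u: "u = L @ x # R" and x: "x = Min (set u) \<or> x = Max (set u)"
    and L: "\<And>y. y \<in> set L \<Longrightarrow> y \<noteq> Min (set u) \<and> y \<noteq> Max (set u)"
  shows "hr u = Node (hr L) x (hr R)"
proof -
  have ne: "u \<noteq> []" using u by simp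
  have j: "spl u = length L"
  proof (rule spl_eqI)
    show "length L < length u" using u by simp
    show "u ! length L = Min (set u) \<or> u ! length L = Max (set u)" using u x by simp
    fix i assume "i < length L"
    then have "u ! i \<in> set L" using u by (simp add: nth_append)
    then show "u ! i \<noteq> Min (set u) \<and> u ! i \<noteq> Max (set u)" using L by blast
  qed
  show ?thesis using hr_Cons_eq[OF ne] j u by simp
qed

lemma lc_Node_ne: "l \<noteq> Leaf \<Longrightarrow> leaf_count (Node l a r) = leaf_count l + leaf_count r"
  by simp

lemma f_decomp:
  fixes S :: "int set" and a :: int and k :: nat
  assumes fin: "finite S" and aS: "a \<in> S" and am: "a \<noteq> Min S" and c2: "2 \<le> card S"
  shows "card {u \<in> arr S. hd u = a \<and> alt True u \<and> leaf_count (hr u) = k} =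
   (\<Sum>A\<in>{A. A \<subseteq> S - {Min S, Max S} \<and> a \<in> A}. \<Sum>k1\<le>k.
      card {L \<in> arr A. hd L = a \<and> alt True L \<and> leaf_count (hr L) = k1} *
      card {R \<in> arr (S - A - {if even (card A) then Min S else Max S}).
              alt (odd (card A)) R \<and> leaf_count (hr R) = k - k1})"
proof -
  define m where "m = Min S"
  define M where "M = Max S"
  define xf where "xf A = (if even (card A) then m else M)" for A :: "int set"
  define AA where "AA = {A. A \<subseteq> S - {m, M} \<and> a \<in> A}"
  define XX where "XX A = {L \<in> arr A. hd L = a \<and> alt True L}" for A
  define YY where "YY A = {R \<in> arr (S - A - {xf A}). alt (odd (card A)) R}" for A
  define phi where "phi p = fst p @ xf (set (fst p)) # snd p" for p :: "int list \<times> int list"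
  define w where "w u = leaf_count (hr u)" for u
  have Sne: "S \<noteq> {}" using aS by auto
  have mS: "m \<in> S" "M \<in> S" using fin Sne m_def M_def by auto
  have mle: "\<And>y. y \<in> S \<Longrightarrow> m \<le> y \<and> y \<le> M" using fin m_def M_def by simp
  have mM: "m \<noteq> M"
  proof
    assume e: "m = M"
    have "S \<subseteq> {m}" using mle e by force
    then have "card S \<le> card {m}" by (intro card_mono) auto
    then have "card S \<le> 1" by simp
    then show False using c2 by simp
  qed
  have xfS: "xf A \<in> {m, M}" for A unfolding xf_def by simp
  have "AA \<subseteq> Pow S" unfolding AA_def by auto
  then have finAA: "finite AA" by (rule finite_subset) (simp add: fin)
  have XA: "\<And>A L. A \<in> AA \<Longrightarrow> L \<in> XX A \<Longrightarrow> set L = A" unfolding XX_def by simp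
  have inj: "inj_on phi {(L,R). \<exists>A\<in>AA. L \<in> XX A \<and> R \<in> YY A}"
  proof (rule inj_onI)
    fix p q assume p: "p \<in> {(L,R). \<exists>A\<in>AA. L \<in> XX A \<and> R \<in> YY A}"
      and q: "q \<in> {(L,R). \<exists>A\<in>AA. L \<in> XX A \<and> R \<in> YY A}" and e: "phi p = phi q"
    obtain A where A: "A \<in> AA" "fst p \<in> XX A" using p by auto
    obtain B where B: "B \<in> AA" "fst q \<in> XX B" using q by auto
    have "set (fst p) \<inter> {m,M} = {}" "set (fst q) \<inter> {m,M} = {}"
      using A B XA unfolding AA_def by auto
    then have "fst p = fst q \<and> snd p = snd q"
      using split_first[OF e[unfolded phi_def] xfS xfS] by blast
    then show "p = q" by (simp add: prod_eq_iff)
  qed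
  have T: "{u \<in> arr S. hd u = a \<and> alt True u \<and> w u = k} =
     phi ` {(L,R). (\<exists>A\<in>AA. L \<in> XX A \<and> R \<in> YY A) \<and> w L + w R = k}"
  proof (intro equalityI subsetI)
    fix u assume "u \<in> {u \<in> arr S. hd u = a \<and> alt True u \<and> w u = k}"
    then have u: "distinct u" "set u = S" "hd u = a" "alt True u" "w u = k" by auto
    have une: "u \<noteq> []" using u(2) Sne by auto
    have mu: "Min (set u) = m" "Max (set u) = M" using u(2) m_def M_def by auto
    define j where "j = spl u"
    define L where "L = take j u"
    define R where "R = drop (Suc j) u"
    define x where "x = u ! j"
    have jl: "j < length u" using spl_props(1)[OF une] j_def by simp
    have uLR: "u = L @ x # R" unfolding L_def R_def x_def using jl by (simp add: id_take_nth_drop[symmetric])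
    have lenL: "length L = j" using jl L_def by simp
    have xmM: "x = m \<or> x = M" using spl_props(2)[OF une] mu x_def j_def by simp
    have notL: "y \<noteq> m \<and> y \<noteq> M" if yL: "y \<in> set L" for y
    proof -
      obtain i where i: "i < j" "u!i = y" using in_take_nth[of y j u] yL L_def by blast
      show ?thesis using spl_props(3)[OF une, of i] i j_def mu by simp
    qed
    have lenu: "length u = card S" using u(1,2) distinct_card by metis
    have u0: "u ! 0 = a" using u(3) une by (simp add: hd_conv_nth)
    have j0: "j \<noteq> 0"
    proof
      assume "j = 0"
      then have "a = m \<or> a = M" using xmM x_def u0 by simp
      moreover have "a \<noteq> M"
      proof
        assume aM: "a = M"
        have "Suc 0 < length u" using lenu c2 by simp
        then have "u!0 < u!1" using u(4) unfolding alt_def by auto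
        moreover have "u!1 \<in> S" using \<open>Suc 0 < length u\<close> u(2) nth_mem by fastforce
        ultimately show False using mle u0 aM by fastforce
      qed
      ultimately show False using am m_def by simp
    qed
    have Lne: "L \<noteq> []" using lenL j0 by auto
    have hdL: "hd L = a" using Lne uLR u(3) by simp
    have dist: "distinct L" "distinct R" "x \<notin> set L" "x \<notin> set R" "set L \<inter> set R = {}"
      using u(1) uLR by auto
    have setL: "set L \<subseteq> S - {m, M}" using notL uLR u(2) by auto
    have aA: "a \<in> set L" using hdL Lne by auto
    have cardL: "card (set L) = j" using dist(1) lenL distinct_card by metis
    have altu: "alt True L" "alt (odd j) R" "step True (j - 1) (last L) x"
      using u(4) uLR alt_append_iff[of True L "x # R"] alt_Cons_iff[of "True = even j" x R] lenL Lne
      by auto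
    have lastS: "last L \<in> S" "last L \<noteq> m" "last L \<noteq> M" using Lne setL last_in_set by auto
    have xf: "xf (set L) = x"
    proof (cases "x = m")
      case True
      have "even j"
      proof (rule ccontr)
        assume "odd j"
        then have "last L < x" using altu(3) j0 unfolding step_def by auto
        then show False using True lastS mle by fastforce
      qed
      then show ?thesis unfolding xf_def cardL using True by simp
    next
      case False
      then have xM: "x = M" using xmM by simp
      have "odd j"
      proof (rule ccontr)
        assume "\<not> odd j"
        then have "x < last L" using altu(3) j0 unfolding step_def by auto
        then show False using xM lastS mle by fastforce
      qed
      then show ?thesis unfolding xf_def cardL using xM mM by simp
    qed
    have setR: "set R = S - set L - {x}" using uLR u(2) dist by auto
    have hu: "hr u = Node (hr L) x (hr R)"
      by (rule hr_split[OF uLR]) (use xmM mu notL in auto)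
    have wu: "w u = w L + w R" unfolding w_def hu using Lne by simp
    have "L \<in> XX (set L)" unfolding XX_def using dist altu hdL by simp
    moreover have "R \<in> YY (set L)" unfolding YY_def xf using dist altu setR cardL by simp
    moreover have "set L \<in> AA" unfolding AA_def using setL aA by simp
    ultimately have "(L, R) \<in> {(L,R). (\<exists>A\<in>AA. L \<in> XX A \<and> R \<in> YY A) \<and> w L + w R = k}"
      using wu u(5) by auto
    moreover have "u = phi (L, R)" unfolding phi_def using xf uLR by simp
    ultimately show "u \<in> phi ` {(L,R). (\<exists>A\<in>AA. L \<in> XX A \<and> R \<in> YY A) \<and> w L + w R = k}"
      by blast
  next
    fix u assume "u \<in> phi ` {(L,R). (\<exists>A\<in>AA. L \<in> XX A \<and> R \<in> YY A) \<and> w L + w R = k}"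
    then obtain L R A where LR: "u = phi (L, R)" "A \<in> AA" "L \<in> XX A" "R \<in> YY A" "w L + w R = k"
      by blast
    have L: "distinct L" "set L = A" "hd L = a" "alt True L" using LR(3) XX_def by auto
    have R: "distinct R" "set R = S - A - {xf A}" "alt (odd (card A)) R" using LR(4) YY_def by auto
    have A: "A \<subseteq> S - {m, M}" "a \<in> A" using LR(2) AA_def by auto
    define x where "x = xf A"
    have uLR: "u = L @ x # R" using LR(1) L(2) phi_def x_def by simp
    have Lne: "L \<noteq> []" using L(2) A(2) by auto
    have lenL: "length L = card A" using L(1,2) distinct_card by metis
    have xS: "x \<in> S" "x \<notin> A" using xfS[of A] mS A(1) x_def by auto
    have R2: "set R = S - A - {x}" using R(2) unfolding x_def .
    have d1: "set L \<inter> set R = {}" using L(2) R2 by blast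
    have d2: "x \<notin> set L" "x \<notin> set R" using L(2) R2 xS(2) by blast+
    have du: "distinct u" unfolding uLR using L(1) R(1) d1 d2 by simp
    have su0: "set u = A \<union> insert x (S - A - {x})" unfolding uLR using L(2) R2 by simp
    have su: "set u = S" unfolding su0 using A(1) xS(1) by blast
    have hu0: "hd u = a" using uLR Lne L(3) by simp
    have mu: "Min (set u) = m" "Max (set u) = M" using su m_def M_def by auto
    have lastS: "last L \<in> S" "last L \<noteq> m" "last L \<noteq> M" using Lne L(2) A(1) last_in_set by auto
    have hdR: "hd R \<in> S \<and> hd R \<noteq> x" if "R \<noteq> []"
    proof -
      have "hd R \<in> set R" using that by simp
      then have "hd R \<in> S - A - {x}" by (simp only: R2)
      then show ?thesis by simp
    qed
    have altu: "alt True u"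
    proof -
      have s1: "step True (length L - 1) (last L) x"
      proof (cases "even (card A)")
        case True
        then have "odd (length L - 1)" using lenL Lne by (cases "length L") auto
        moreover have "x = m" using True x_def xf_def by simp
        ultimately show ?thesis unfolding step_def using lastS mle by fastforce
      next
        case False
        then have "even (length L - 1)" using lenL Lne by (cases "length L") auto
        moreover have "x = M" using False x_def xf_def by simp
        ultimately show ?thesis unfolding step_def using lastS mle by fastforce
      qed
      have s2: "alt (True = even (length L)) (x # R)"
        unfolding alt_Cons_iff
      proof (intro conjI impI)
        show "alt (\<not> (True = even (length L))) R" using R(3) lenL by simp
        assume Rne: "R \<noteq> []"
        show "if True = even (length L) then x < hd R else hd R < x"
        proof (cases "even (card A)")
          case True
          then show ?thesis using lenL x_def xf_def hdR[OF Rne] mle by fastforce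
        next
          case False
          then show ?thesis using lenL x_def xf_def hdR[OF Rne] mle by fastforce
        qed
      qed
      show ?thesis unfolding uLR alt_append_iff using L(4) s1 s2 by simp
    qed
    have notL: "\<And>y. y \<in> set L \<Longrightarrow> y \<noteq> Min (set u) \<and> y \<noteq> Max (set u)"
      using mu L(2) A(1) by auto
    have hu: "hr u = Node (hr L) x (hr R)"
      by (rule hr_split[OF uLR]) (use mu xfS x_def notL in auto)
    have "w u = k" unfolding w_def hu using Lne LR(5) w_def by simp
    then show "u \<in> {u \<in> arr S. hd u = a \<and> alt True u \<and> w u = k}"
      using du su hu0 altu by simp
  qed
  have fX: "finite (XX A)" if "A \<in> AA" for A
  proof -
    have "A \<subseteq> S" using that AA_def by auto
    then have "finite A" using fin by (rule finite_subset)
    have "XX A \<subseteq> arr A" unfolding XX_def by blast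
    then show ?thesis using finite_arr[OF \<open>finite A\<close>] by (rule finite_subset)
  qed
  have fY: "finite (YY A)" for A
  proof -
    have f: "finite (arr (S - A - {xf A}))" using finite_arr fin by simp
    have "YY A \<subseteq> arr (S - A - {xf A})" unfolding YY_def by blast
    then show ?thesis using f by (rule finite_subset)
  qed
  have eqX: "{L \<in> XX A. leaf_count (hr L) = k1} = {L \<in> arr A. hd L = a \<and> alt True L \<and> leaf_count (hr L) = k1}" for A k1
    unfolding XX_def w_def by auto
  have eqY: "{R \<in> YY A. leaf_count (hr R) = k2} = {R \<in> arr (S - A - {if even (card A) then Min S else Max S}).
              alt (odd (card A)) R \<and> leaf_count (hr R) = k2}" for A k2
    unfolding YY_def w_def xf_def m_def M_def by auto
  have "card {u \<in> arr S. hd u = a \<and> alt True u \<and> w u = k} =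
    (\<Sum>A\<in>AA. \<Sum>k1\<le>k. card {L \<in> XX A. w L = k1} * card {R \<in> YY A. w R = k - k1})"
    by (rule card_decomp[OF finAA fX fY XA inj T])
  then show ?thesis
    unfolding eqX eqY AA_def m_def M_def w_def .
qed

definition trip :: "(int list \<Rightarrow> int \<Rightarrow> int \<Rightarrow> int \<Rightarrow> int list \<Rightarrow> bool) \<Rightarrow> int list \<Rightarrow> bool" where
  "trip C p \<longleftrightarrow> (\<forall>xs x y z ys. p = xs @ x # y # z # ys \<longrightarrow> C xs x y z ys)"

definition CA :: "int list \<Rightarrow> int \<Rightarrow> int \<Rightarrow> int \<Rightarrow> int list \<Rightarrow> bool" where
  "CA xs x y z ys \<longleftrightarrow> \<not> (y < x \<and> z < y) \<and>
     (y < x \<and> y < z \<longrightarrow> Max (set (takeWhile (\<lambda>v. y < v) (x # rev xs))) < Max (set (takeWhile (\<lambda>v. y < v) (z # ys))))"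

definition lasc :: "int list \<Rightarrow> bool" where
  "lasc p \<longleftrightarrow> last (butlast p) < last p"

definition andr :: "int list \<Rightarrow> bool" where
  "andr p \<longleftrightarrow> trip CA p \<and> (2 \<le> length p \<longrightarrow> lasc p)"

lemma app_eq_cases:
  "\<alpha> @ m # \<beta> = xs @ x # y # z # ys \<Longrightarrow>
   (\<exists>ys'. \<alpha> = xs @ x # y # z # ys' \<and> ys = ys' @ m # \<beta>) \<or>
   (\<alpha> = xs @ [x, y] \<and> z = m \<and> ys = \<beta>) \<or>
   (\<alpha> = xs @ [x] \<and> y = m \<and> \<beta> = z # ys) \<or>
   (\<alpha> = xs \<and> x = m \<and> \<beta> = y # z # ys) \<or>
   (\<exists>xs'. xs = \<alpha> @ m # xs' \<and> \<beta> = xs' @ x # y # z # ys)"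
proof (induction xs arbitrary: \<alpha>)
  case Nil
  then show ?case
    by (cases \<alpha>; cases "tl \<alpha>"; cases "tl (tl \<alpha>)"; auto)
next
  case (Cons w xs)
  show ?case
  proof (cases \<alpha>)
    case Nil
    then show ?thesis using Cons.prems by (auto)
  next
    case (Cons a \<alpha>')
    then have "\<alpha>' @ m # \<beta> = xs @ x # y # z # ys" "a = w" using Cons.prems by simp_all
    from Cons.IH[OF this(1)] show ?thesis using Cons \<open>a = w\<close> by (auto)
  qed
qed

lemma trip_split:
  "trip C (\<alpha> @ m # \<beta>) \<longleftrightarrow>
    (\<forall>xs x y z ys. \<alpha> = xs @ x # y # z # ys \<longrightarrow> C xs x y z (ys @ m # \<beta>)) \<and>
    (\<forall>xs x y. \<alpha> = xs @ [x, y] \<longrightarrow> C xs x y m \<beta>) \<and>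
    (\<forall>xs x z ys. \<alpha> = xs @ [x] \<longrightarrow> \<beta> = z # ys \<longrightarrow> C xs x m z ys) \<and>
    (\<forall>y z ys. \<beta> = y # z # ys \<longrightarrow> C \<alpha> m y z ys) \<and>
    (\<forall>xs x y z ys. \<beta> = xs @ x # y # z # ys \<longrightarrow> C (\<alpha> @ m # xs) x y z ys)"
  (is "?L \<longleftrightarrow> ?R")
proof
  assume L: ?L
  show ?R unfolding trip_def
  proof (intro conjI allI impI)
    fix xs x y z ys assume "\<alpha> = xs @ x # y # z # ys"
    then show "C xs x y z (ys @ m # \<beta>)" using L unfolding trip_def by simp
  next
    fix xs x y assume "\<alpha> = xs @ [x, y]"
    then show "C xs x y m \<beta>" using L unfolding trip_def by simp
  next
    fix xs x z ys assume "\<alpha> = xs @ [x]" "\<beta> = z # ys"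
    then show "C xs x m z ys" using L unfolding trip_def by simp
  next
    fix y z ys assume "\<beta> = y # z # ys"
    then show "C \<alpha> m y z ys" using L unfolding trip_def by simp
  next
    fix xs x y z ys assume "\<beta> = xs @ x # y # z # ys"
    then show "C (\<alpha> @ m # xs) x y z ys" using L unfolding trip_def by simp
  qed
next
  assume R: ?R
  show ?L unfolding trip_def
  proof (intro allI impI)
    fix xs x y z ys assume e: "\<alpha> @ m # \<beta> = xs @ x # y # z # ys"
    from app_eq_cases[OF e] show "C xs x y z ys"
    proof (elim disjE exE conjE)
      fix ys' assume "\<alpha> = xs @ x # y # z # ys'" "ys = ys' @ m # \<beta>"
      then show ?thesis using R by simp
    next
      assume "\<alpha> = xs @ [x, y]" "z = m" "ys = \<beta>"
      then show ?thesis using R by simp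
    next
      assume "\<alpha> = xs @ [x]" "y = m" "\<beta> = z # ys"
      then show ?thesis using R by simp
    next
      assume "\<alpha> = xs" "x = m" "\<beta> = y # z # ys"
      then show ?thesis using R by simp
    next
      fix xs' assume "xs = \<alpha> @ m # xs'" "\<beta> = xs' @ x # y # z # ys"
      then show ?thesis using R by simp
    qed
  qed
qed

lemma tw_stop: "\<not> P m \<Longrightarrow> takeWhile P (xs @ m # ys) = takeWhile P xs"
  by (induction xs) auto

lemma tw_all: "(\<forall>v\<in>set xs. P v) \<Longrightarrow> takeWhile P xs = xs"
  by (induction xs) auto

lemma butlast_two[simp]: "butlast (xs @ [x, y]) = xs @ [x]"
  by (induction xs) auto

lemma trip_short: "length p \<le> 2 \<Longrightarrow> trip C p"
  unfolding trip_def by auto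

lemma andr_split:
  assumes d: "distinct (\<alpha> @ m # \<beta>)" and mm: "\<And>v. v \<in> set \<alpha> \<union> set \<beta> \<Longrightarrow> m < v"
    and l2: "2 \<le> length (\<alpha> @ m # \<beta>)"
  shows "andr (\<alpha> @ m # \<beta>) \<longleftrightarrow> \<beta> \<noteq> [] \<and> andr \<alpha> \<and> andr \<beta> \<and> (\<alpha> \<noteq> [] \<longrightarrow> Max (set \<alpha>) < Max (set \<beta>))"
proof -
  have mA: "m \<notin> set \<alpha>" "m \<notin> set \<beta>" using d by auto
  have eq1: "CA xs x y z (ys @ m # \<beta>) \<longleftrightarrow> CA xs x y z ys" if a: "\<alpha> = xs @ x # y # z # ys" for xs x y z ys
  proof -
    have "m < y" using mm a by simp
    then have "takeWhile (\<lambda>v. y < v) (z # ys @ m # \<beta>) = takeWhile (\<lambda>v. y < v) (z # ys)"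
      using tw_stop[of "\<lambda>v. y < v" m "z # ys" \<beta>] by simp
    then show ?thesis unfolding CA_def by (simp only:)
  qed
  have T1: "(\<forall>xs x y z ys. \<alpha> = xs @ x # y # z # ys \<longrightarrow> CA xs x y z (ys @ m # \<beta>)) \<longleftrightarrow> trip CA \<alpha>"
    unfolding trip_def using eq1 by (metis)
  have eq5: "CA (\<alpha> @ m # xs) x y z ys \<longleftrightarrow> CA xs x y z ys" if a: "\<beta> = xs @ x # y # z # ys" for xs x y z ys
  proof -
    have "m < y" using mm a by simp
    then have "takeWhile (\<lambda>v. y < v) (x # rev (\<alpha> @ m # xs)) = takeWhile (\<lambda>v. y < v) (x # rev xs)"
      using tw_stop[of "\<lambda>v. y < v" m "x # rev xs" "rev \<alpha>"] by simp
    then show ?thesis unfolding CA_def by (simp only:)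
  qed
  have T5: "(\<forall>xs x y z ys. \<beta> = xs @ x # y # z # ys \<longrightarrow> CA (\<alpha> @ m # xs) x y z ys) \<longleftrightarrow> trip CA \<beta>"
    unfolding trip_def using eq5 by (metis)
  have T4: "(\<forall>y z ys. \<beta> = y # z # ys \<longrightarrow> CA \<alpha> m y z ys)"
  proof (intro allI impI)
    fix y z ys assume "\<beta> = y # z # ys"
    then have "m < y" using mm by simp
    then show "CA \<alpha> m y z ys" unfolding CA_def by simp
  qed
  have T2: "(\<forall>xs x y. \<alpha> = xs @ [x, y] \<longrightarrow> CA xs x y m \<beta>) \<longleftrightarrow> (2 \<le> length \<alpha> \<longrightarrow> lasc \<alpha>)"
  proof
    assume H: "\<forall>xs x y. \<alpha> = xs @ [x, y] \<longrightarrow> CA xs x y m \<beta>"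
    show "2 \<le> length \<alpha> \<longrightarrow> lasc \<alpha>"
    proof
      assume "2 \<le> length \<alpha>"
      then obtain xs x y where a: "\<alpha> = xs @ [x, y]"
      proof -
        assume l: "2 \<le> length \<alpha>" and th: "\<And>xs x y. \<alpha> = xs @ [x, y] \<Longrightarrow> thesis"
        obtain \<alpha>1 y where a1: "\<alpha> = \<alpha>1 @ [y]" using l by (cases \<alpha> rule: rev_cases) auto
        obtain xs x where a2: "\<alpha>1 = xs @ [x]" using l a1 by (cases \<alpha>1 rule: rev_cases) auto
        show thesis using th[of xs x y] a1 a2 by simp
      qed
      have "m < y" using mm a by simp
      moreover have "x \<noteq> y" using d a by simp
      ultimately have "x < y" using H a unfolding CA_def by auto
      then show "lasc \<alpha>" unfolding lasc_def a by simp
    qed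
  next
    assume H: "2 \<le> length \<alpha> \<longrightarrow> lasc \<alpha>"
    show "\<forall>xs x y. \<alpha> = xs @ [x, y] \<longrightarrow> CA xs x y m \<beta>"
    proof (intro allI impI)
      fix xs x y assume a: "\<alpha> = xs @ [x, y]"
      then have "x < y" using H unfolding lasc_def by simp
      then show "CA xs x y m \<beta>" unfolding CA_def by simp
    qed
  qed
  have T3: "(\<forall>xs x z ys. \<alpha> = xs @ [x] \<longrightarrow> \<beta> = z # ys \<longrightarrow> CA xs x m z ys) \<longleftrightarrow>
      (\<alpha> \<noteq> [] \<longrightarrow> \<beta> \<noteq> [] \<longrightarrow> Max (set \<alpha>) < Max (set \<beta>))"
  proof
    assume H: "\<forall>xs x z ys. \<alpha> = xs @ [x] \<longrightarrow> \<beta> = z # ys \<longrightarrow> CA xs x m z ys"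
    show "\<alpha> \<noteq> [] \<longrightarrow> \<beta> \<noteq> [] \<longrightarrow> Max (set \<alpha>) < Max (set \<beta>)"
    proof (intro impI)
      assume ne: "\<alpha> \<noteq> []" "\<beta> \<noteq> []"
      obtain xs x where a: "\<alpha> = xs @ [x]" using ne(1) by (metis append_butlast_last_id)
      obtain z ys where b: "\<beta> = z # ys" using ne(2) by (metis list.exhaust)
      have c: "CA xs x m z ys" using H a b by simp
      have mx: "m < x" "m < z" using mm a b by auto
      have tw1: "takeWhile (\<lambda>v. m < v) (x # rev xs) = x # rev xs" using mm a by (intro tw_all) auto
      have tw2: "takeWhile (\<lambda>v. m < v) (z # ys) = z # ys" using mm b by (intro tw_all) auto
      have "Max (set (x # rev xs)) < Max (set (z # ys))" using c mx unfolding CA_def tw1 tw2 by blast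
      moreover have "set (x # rev xs) = set \<alpha>" "set (z # ys) = set \<beta>" using a b by auto
      ultimately show "Max (set \<alpha>) < Max (set \<beta>)" by metis
    qed
  next
    assume H: "\<alpha> \<noteq> [] \<longrightarrow> \<beta> \<noteq> [] \<longrightarrow> Max (set \<alpha>) < Max (set \<beta>)"
    show "\<forall>xs x z ys. \<alpha> = xs @ [x] \<longrightarrow> \<beta> = z # ys \<longrightarrow> CA xs x m z ys"
    proof (intro allI impI)
      fix xs x z ys assume a: "\<alpha> = xs @ [x]" and b: "\<beta> = z # ys"
      have mx: "m < x" "m < z" using mm a b by auto
      have tw1: "takeWhile (\<lambda>v. m < v) (x # rev xs) = x # rev xs" using mm a by (intro tw_all) auto
      have tw2: "takeWhile (\<lambda>v. m < v) (z # ys) = z # ys" using mm b by (intro tw_all) auto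
      have "Max (set \<alpha>) < Max (set \<beta>)" using H a b by simp
      moreover have "set (x # rev xs) = set \<alpha>" "set (z # ys) = set \<beta>" using a b by auto
      ultimately have "Max (set (x # rev xs)) < Max (set (z # ys))" by metis
      then show "CA xs x m z ys" using mx unfolding CA_def tw1 tw2 by simp
    qed
  qed
  have LA: "lasc (\<alpha> @ m # \<beta>) \<longleftrightarrow> \<beta> \<noteq> [] \<and> (2 \<le> length \<beta> \<longrightarrow> lasc \<beta>)"
  proof (cases \<beta> rule: rev_cases)
    case Nil
    then have ne: "\<alpha> \<noteq> []" using l2 by auto
    then have "m < last \<alpha>" using mm by simp
    then show ?thesis using Nil ne unfolding lasc_def by simp
  next
    case (snoc \<beta>' b)
    show ?thesis
    proof (cases "\<beta>' = []")
      case True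
      then show ?thesis using snoc mm unfolding lasc_def by simp
    next
      case False
      then have "Suc 0 \<le> length \<beta>'" by (cases \<beta>') auto
      then show ?thesis using snoc False unfolding lasc_def by (simp add: butlast_append)
    qed
  qed
  have "andr (\<alpha> @ m # \<beta>) \<longleftrightarrow> trip CA (\<alpha> @ m # \<beta>) \<and> lasc (\<alpha> @ m # \<beta>)"
    unfolding andr_def using l2 by simp
  also have "\<dots> \<longleftrightarrow> trip CA \<alpha> \<and> (2 \<le> length \<alpha> \<longrightarrow> lasc \<alpha>) \<and>
      (\<alpha> \<noteq> [] \<longrightarrow> \<beta> \<noteq> [] \<longrightarrow> Max (set \<alpha>) < Max (set \<beta>)) \<and> trip CA \<beta> \<and>
      \<beta> \<noteq> [] \<and> (2 \<le> length \<beta> \<longrightarrow> lasc \<beta>)"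
    unfolding trip_split[of CA \<alpha> m \<beta>] T1 T2 T3 T5 LA using T4 by blast
  also have "\<dots> \<longleftrightarrow> \<beta> \<noteq> [] \<and> andr \<alpha> \<and> andr \<beta> \<and> (\<alpha> \<noteq> [] \<longrightarrow> Max (set \<alpha>) < Max (set \<beta>))"
    unfolding andr_def by blast
  finally show ?thesis .
qed

definition dc :: "int list \<Rightarrow> nat" where
  "dc p = card {i. Suc i < length p \<and> p ! Suc i < p ! i}"

lemma dc_Nil[simp]: "dc [] = 0" and dc_one[simp]: "dc [x] = 0"
  unfolding dc_def by auto

lemma dc_Cons2: "dc (x # y # r) = (if y < x then 1 else 0) + dc (y # r)"
proof -
  define D where "D p = {i. Suc i < length p \<and> p ! Suc i < p ! i}" for p :: "int list"
  have e: "D (x # y # r) = (if y < x then {0} else {}) \<union> Suc ` D (y # r)"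
  proof (intro equalityI subsetI)
    fix i assume i: "i \<in> D (x # y # r)"
    show "i \<in> (if y < x then {0} else {}) \<union> Suc ` D (y # r)"
    proof (cases i)
      case 0 then show ?thesis using i D_def by simp
    next
      case (Suc j)
      then have "j \<in> D (y # r)" using i D_def by simp
      then show ?thesis using Suc by blast
    qed
  next
    fix i assume i: "i \<in> (if y < x then {0} else {}) \<union> Suc ` D (y # r)"
    show "i \<in> D (x # y # r)"
    proof (cases "i \<in> Suc ` D (y # r)")
      case True
      then obtain j where "i = Suc j" "j \<in> D (y # r)" by blast
      then show ?thesis using D_def by simp
    next
      case False
      then have "i = 0" "y < x" using i by (auto split: if_splits)
      then show ?thesis using D_def by simp
    qed
  qed
  have fin: "finite (D (y # r))" unfolding D_def by (rule finite_subset[of _ "{..<length (y#r)}"]) auto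
  have "card (D (x # y # r)) = (if y < x then 1 else 0) + card (D (y # r))"
  proof (cases "y < x")
    case True
    then have "D (x # y # r) = insert 0 (Suc ` D (y # r))" using e by simp
    moreover have "0 \<notin> Suc ` D (y # r)" by auto
    ultimately show ?thesis using fin True by (simp add: card_image)
  next
    case False
    then have "D (x # y # r) = Suc ` D (y # r)" using e by simp
    then show ?thesis using False by (simp add: card_image)
  qed
  then show ?thesis unfolding dc_def D_def .
qed

lemma dc_append: "dc (xs @ y # ys) = dc (xs @ [y]) + dc (y # ys)"
proof (induction xs)
  case Nil then show ?case by simp
next
  case (Cons a xs)
  show ?case
  proof (cases xs)
    case Nil then show ?thesis by (simp add: dc_Cons2)
  next
    case (Cons b r)
    then show ?thesis using Cons.IH by (simp add: dc_Cons2)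
  qed
qed

lemma dc_split:
  assumes "L \<noteq> []" "R \<noteq> []" "m < last L" "m < hd R"
  shows "dc (L @ m # R) = dc L + 1 + dc R"
proof -
  obtain L' l where L: "L = L' @ [l]" using assms(1) by (metis append_butlast_last_id)
  obtain b r where R: "R = b # r" using assms(2) by (metis list.exhaust)
  have "dc (L @ m # R) = dc (L @ [m]) + dc (m # R)" by (rule dc_append)
  also have "dc (L @ [m]) = dc L + 1"
    using dc_append[of L' l "[m]"] assms(3) L by (simp add: dc_Cons2)
  also have "dc (m # R) = dc R" using R assms(4) by (simp add: dc_Cons2)
  finally show ?thesis .
qed

lemma andr_Nil[simp]: "andr []" and andr_one[simp]: "andr [x]"
  unfolding andr_def by (auto intro: trip_short)

lemma g_decomp:
  fixes S :: "int set" and a :: int and k :: nat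
  assumes fin: "finite S" and aS: "a \<in> S" and am: "a \<noteq> Min S" and c2: "2 \<le> card S"
  shows "card {u \<in> arr S. hd u = a \<and> andr u \<and> Suc (dc u) = k} =
   (\<Sum>A\<in>{A. A \<subseteq> S - {Min S, Max S} \<and> a \<in> A}. \<Sum>k1\<le>k.
      card {L \<in> arr A. hd L = a \<and> andr L \<and> Suc (dc L) = k1} *
      card {R \<in> arr (S - A - {Min S}). andr R \<and> Suc (dc R) = k - k1})"
proof -
  define m where "m = Min S"
  define M where "M = Max S"
  define AA where "AA = {A. A \<subseteq> S - {m, M} \<and> a \<in> A}"
  define XX where "XX A = {L \<in> arr A. hd L = a \<and> andr L}" for A
  define YY where "YY A = {R \<in> arr (S - A - {m}). andr R}" for A
  define phi where "phi p = fst p @ m # snd p" for p :: "int list \<times> int list"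
  define w where "w u = Suc (dc u)" for u
  have Sne: "S \<noteq> {}" using aS by auto
  have mS: "m \<in> S" "M \<in> S" using fin Sne m_def M_def by auto
  have mle: "\<And>y. y \<in> S \<Longrightarrow> m \<le> y \<and> y \<le> M" using fin m_def M_def by simp
  have mM: "m \<noteq> M"
  proof
    assume e: "m = M"
    have "S \<subseteq> {m}" using mle e by force
    then have "card S \<le> card {m}" by (intro card_mono) auto
    then have "card S \<le> 1" by simp
    then show False using c2 by simp
  qed
  have "AA \<subseteq> Pow S" unfolding AA_def by auto
  then have finAA: "finite AA" by (rule finite_subset) (simp add: fin)
  have XA: "\<And>A L. A \<in> AA \<Longrightarrow> L \<in> XX A \<Longrightarrow> set L = A" unfolding XX_def by simp
  have inj: "inj_on phi {(L,R). \<exists>A\<in>AA. L \<in> XX A \<and> R \<in> YY A}"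
  proof (rule inj_onI)
    fix p q assume p: "p \<in> {(L,R). \<exists>A\<in>AA. L \<in> XX A \<and> R \<in> YY A}"
      and q: "q \<in> {(L,R). \<exists>A\<in>AA. L \<in> XX A \<and> R \<in> YY A}" and e: "phi p = phi q"
    obtain A where A: "A \<in> AA" "fst p \<in> XX A" using p by auto
    obtain B where B: "B \<in> AA" "fst q \<in> XX B" using q by auto
    have "set (fst p) \<inter> {m} = {}" "set (fst q) \<inter> {m} = {}"
      using A B XA unfolding AA_def by auto
    then have "fst p = fst q \<and> snd p = snd q"
      using split_first[OF e[unfolded phi_def], of "{m}"] by blast
    then show "p = q" by (simp add: prod_eq_iff)
  qed
  have T: "{u \<in> arr S. hd u = a \<and> andr u \<and> w u = k} =
     phi ` {(L,R). (\<exists>A\<in>AA. L \<in> XX A \<and> R \<in> YY A) \<and> w L + w R = k}"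
  proof (intro equalityI subsetI)
    fix u assume "u \<in> {u \<in> arr S. hd u = a \<and> andr u \<and> w u = k}"
    then have u: "distinct u" "set u = S" "hd u = a" "andr u" "w u = k" by auto
    have "m \<in> set u" using u(2) mS by simp
    then obtain L R where uLR: "u = L @ m # R" by (metis split_list)
    have lenu: "length u = card S" using u(1,2) distinct_card by metis
    have dist: "distinct L" "distinct R" "m \<notin> set L" "m \<notin> set R" "set L \<inter> set R = {}"
      using u(1) uLR by auto
    have sLR: "set L \<union> set R = S - {m}" using u(2) uLR dist by auto
    have mm: "\<And>v. v \<in> set L \<union> set R \<Longrightarrow> m < v"
    proof -
      fix v assume "v \<in> set L \<union> set R"
      then have "v \<in> S" "v \<noteq> m" using sLR by auto
      then show "m < v" using mle[of v] by simp
    qed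
    have l2: "2 \<le> length (L @ m # R)" using lenu c2 uLR by simp
    have sp: "R \<noteq> [] \<and> andr L \<and> andr R \<and> (L \<noteq> [] \<longrightarrow> Max (set L) < Max (set R))"
      using andr_split[OF _ mm l2] u(1,4) uLR by simp
    have Lne: "L \<noteq> []"
    proof
      assume "L = []"
      then have "hd u = m" using uLR by simp
      then show False using u(3) am m_def by simp
    qed
    have hdL: "hd L = a" using Lne uLR u(3) by simp
    have MR: "M \<notin> set L"
    proof
      assume HML: "M \<in> set L"
      have "Max (set L) = M" using HML mle sLR by (intro Max_eqI) auto
      moreover have "Max (set R) \<le> M" using sp sLR mle by (metis Max_in List.finite_set Un_iff DiffD1 set_empty)
      moreover have "Max (set L) < Max (set R)" using sp Lne by blast
      ultimately show False by linarith
    qed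
    have setL: "set L \<subseteq> S - {m, M}" using sLR dist MR by auto
    have aA: "a \<in> set L" using hdL Lne by auto
    have setR: "set R = S - set L - {m}" using sLR dist by auto
    have wu: "w u = w L + w R" unfolding w_def uLR
    proof -
      have "m < last L" using mm Lne by simp
      moreover have "m < hd R" using mm sp by simp
      ultimately show "Suc (dc (L @ m # R)) = Suc (dc L) + Suc (dc R)"
        using dc_split[OF Lne _ _] sp by simp
    qed
    have "L \<in> XX (set L)" unfolding XX_def using dist sp hdL by simp
    moreover have "R \<in> YY (set L)" unfolding YY_def using dist sp setR by simp
    moreover have "set L \<in> AA" unfolding AA_def using setL aA by simp
    ultimately have "(L, R) \<in> {(L,R). (\<exists>A\<in>AA. L \<in> XX A \<and> R \<in> YY A) \<and> w L + w R = k}"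
      using wu u(5) by auto
    moreover have "u = phi (L, R)" unfolding phi_def using uLR by simp
    ultimately show "u \<in> phi ` {(L,R). (\<exists>A\<in>AA. L \<in> XX A \<and> R \<in> YY A) \<and> w L + w R = k}"
      by blast
  next
    fix u assume "u \<in> phi ` {(L,R). (\<exists>A\<in>AA. L \<in> XX A \<and> R \<in> YY A) \<and> w L + w R = k}"
    then obtain L R A where LR: "u = phi (L, R)" "A \<in> AA" "L \<in> XX A" "R \<in> YY A" "w L + w R = k"
      by blast
    have L: "distinct L" "set L = A" "hd L = a" "andr L" using LR(3) XX_def by auto
    have R: "distinct R" "set R = S - A - {m}" "andr R" using LR(4) YY_def by auto
    have A: "A \<subseteq> S - {m, M}" "a \<in> A" using LR(2) AA_def by auto
    have uLR: "u = L @ m # R" using LR(1) phi_def by simp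
    have Lne: "L \<noteq> []" using L(2) A(2) by auto
    have MR: "M \<in> set R" using R(2) A(1) mS mM by auto
    have Rne: "R \<noteq> []" using MR by auto
    have d1: "set L \<inter> set R = {}" using L(2) R(2) by blast
    have d2: "m \<notin> set L" "m \<notin> set R" using L(2) R(2) A(1) by blast+
    have du: "distinct u" unfolding uLR using L(1) R(1) d1 d2 by simp
    have su0: "set u = A \<union> insert m (S - A - {m})" unfolding uLR using L(2) R(2) by simp
    have su: "set u = S" unfolding su0 using A(1) mS(1) by blast
    have hu0: "hd u = a" using uLR Lne L(3) by simp
    have mm: "\<And>v. v \<in> set L \<union> set R \<Longrightarrow> m < v"
    proof -
      fix v assume v: "v \<in> set L \<union> set R"
      then have "v \<in> S" "v \<noteq> m" using L(2) R(2) A(1) by auto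
      then show "m < v" using mle[of v] by simp
    qed
    have l2: "2 \<le> length (L @ m # R)" using Lne by (cases L) auto
    have leM: "\<forall>y\<in>set R. y \<le> M" using R(2) mle by auto
    have maxR: "Max (set R) = M" by (intro Max_eqI) (use MR leM in auto)
    have maxL: "Max (set L) < M"
    proof -
      have "Max (set L) \<in> set L" using Lne by simp
      then have "Max (set L) \<in> S - {m, M}" using L(2) A(1) by blast
      then show ?thesis using mle by force
    qed
    have andru: "andr u"
      unfolding uLR using andr_split[OF _ mm l2] du uLR Rne L(4) R(3) maxR maxL by simp
    have wu: "w u = w L + w R" unfolding w_def uLR
    proof -
      have "m < last L" using mm Lne by simp
      moreover have "m < hd R" using mm Rne by simp
      ultimately show "Suc (dc (L @ m # R)) = Suc (dc L) + Suc (dc R)"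
        using dc_split[OF Lne Rne] by simp
    qed
    show "u \<in> {u \<in> arr S. hd u = a \<and> andr u \<and> w u = k}"
      using du su hu0 andru wu LR(5) by simp
  qed
  have fX: "finite (XX A)" if "A \<in> AA" for A
  proof -
    have "A \<subseteq> S" using that AA_def by auto
    then have "finite A" using fin by (rule finite_subset)
    have "XX A \<subseteq> arr A" unfolding XX_def by blast
    then show ?thesis using finite_arr[OF \<open>finite A\<close>] by (rule finite_subset)
  qed
  have fY: "finite (YY A)" for A
  proof -
    have f: "finite (arr (S - A - {m}))" using finite_arr fin by simp
    have "YY A \<subseteq> arr (S - A - {m})" unfolding YY_def by blast
    then show ?thesis using f by (rule finite_subset)
  qed
  have eqX: "{L \<in> XX A. Suc (dc L) = k1} = {L \<in> arr A. hd L = a \<and> andr L \<and> Suc (dc L) = k1}" for A k1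
    unfolding XX_def by blast
  have eqY: "{R \<in> YY A. Suc (dc R) = k2} = {R \<in> arr (S - A - {Min S}). andr R \<and> Suc (dc R) = k2}" for A k2
    unfolding YY_def m_def by blast
  have "card {u \<in> arr S. hd u = a \<and> andr u \<and> w u = k} =
    (\<Sum>A\<in>AA. \<Sum>k1\<le>k. card {L \<in> XX A. w L = k1} * card {R \<in> YY A. w R = k - k1})"
    by (rule card_decomp[OF finAA fX fY XA inj T])
  then show ?thesis
    unfolding w_def AA_def m_def M_def eqX eqY .
qed

lemma f_min:
  assumes fin: "finite S" and c2: "2 \<le> card S"
  shows "card {u \<in> arr S. hd u = Min S \<and> alt True u \<and> leaf_count (hr u) = k} =
         card {v \<in> arr (S - {Min S}). alt False v \<and> leaf_count (hr v) = k}"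
proof -
  define m where "m = Min S"
  have Sne: "S \<noteq> {}" using c2 by auto
  have mS: "m \<in> S" using fin Sne m_def by simp
  have mle: "\<And>y. y \<in> S \<Longrightarrow> m \<le> y" using fin m_def by simp
  have "card (S - {m}) \<ge> 1" using c2 mS fin by simp
  then have "card (S - {m}) \<noteq> 0" by linarith
  then have S1: "S - {m} \<noteq> {}" by (metis card.empty)
  have inj: "inj_on (Cons m) {v \<in> arr (S - {m}). alt False v \<and> leaf_count (hr v) = k}" by simp
  have key: "Cons m ` {v \<in> arr (S - {m}). alt False v \<and> leaf_count (hr v) = k} =
     {u \<in> arr S. hd u = m \<and> alt True u \<and> leaf_count (hr u) = k}"
  proof (intro equalityI subsetI)
    fix u assume "u \<in> Cons m ` {v \<in> arr (S - {m}). alt False v \<and> leaf_count (hr v) = k}"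
    then obtain v where v: "u = m # v" "distinct v" "set v = S - {m}" "alt False v" "leaf_count (hr v) = k" by auto
    have vne: "v \<noteq> []" using v(3) S1 set_empty by metis
    have hv: "hd v \<in> S - {m}" using v(3) vne hd_in_set by metis
    have "m < hd v" using hv mle by force
    then have altu: "alt True u" using v(1,4) vne by (simp add: alt_Cons_iff)
    have su: "set u = S" using v(1,3) mS by auto
    have "Min (set u) = m" using su m_def by simp
    then have "hr u = Node (hr []) m (hr v)" by (intro hr_split) (use v(1) in auto)
    then have "leaf_count (hr u) = k" using vne v(5) by simp
    then show "u \<in> {u \<in> arr S. hd u = m \<and> alt True u \<and> leaf_count (hr u) = k}"
      using v altu su by simp
  next
    fix u assume u: "u \<in> {u \<in> arr S. hd u = m \<and> alt True u \<and> leaf_count (hr u) = k}"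
    then have une: "u \<noteq> []" using Sne by auto
    define v where "v = tl u"
    have uv: "u = m # v" using une u v_def by (cases u) auto
    have dv: "distinct v" "set v = S - {m}" using u uv by auto
    have vne: "v \<noteq> []" using dv(2) S1 set_empty by metis
    have "alt False v" using u uv by (simp add: alt_Cons_iff)
    moreover have "Min (set u) = m" using u m_def by simp
    then have "hr u = Node (hr []) m (hr v)" by (intro hr_split) (use uv in auto)
    then have "leaf_count (hr v) = k" using vne u by simp
    ultimately show "u \<in> Cons m ` {v \<in> arr (S - {m}). alt False v \<and> leaf_count (hr v) = k}"
      using dv uv by auto
  qed
  show ?thesis using card_image[OF inj] key m_def by simp
qed

lemma g_min:
  assumes fin: "finite S" and c2: "2 \<le> card S"
  shows "card {u \<in> arr S. hd u = Min S \<and> andr u \<and> Suc (dc u) = k} =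
         card {v \<in> arr (S - {Min S}). andr v \<and> Suc (dc v) = k}"
proof -
  define m where "m = Min S"
  have Sne: "S \<noteq> {}" using c2 by auto
  have mS: "m \<in> S" using fin Sne m_def by simp
  have mle: "\<And>y. y \<in> S \<Longrightarrow> m \<le> y" using fin m_def by simp
  have "card (S - {m}) \<ge> 1" using c2 mS fin by simp
  then have "card (S - {m}) \<noteq> 0" by linarith
  then have S1: "S - {m} \<noteq> {}" by (metis card.empty)
  have inj: "inj_on (Cons m) {v \<in> arr (S - {m}). andr v \<and> Suc (dc v) = k}" by simp
  have gen: "andr (m # v) \<longleftrightarrow> andr v" "dc (m # v) = dc v" if v: "distinct v" "set v = S - {m}" for v
  proof -
    have vne: "v \<noteq> []" using v(2) S1 set_empty by metis
    have mm: "\<And>x. x \<in> set [] \<union> set v \<Longrightarrow> m < x" using v mle by force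
    have l2: "2 \<le> length ([] @ m # v)" using vne by (cases v) auto
    have "distinct ([] @ m # v)" using v by simp
    from andr_split[OF this mm l2] show "andr (m # v) \<longleftrightarrow> andr v" using vne by simp
    obtain b r where br: "v = b # r" using vne by (metis list.exhaust)
    have "m < b" using mm br by simp
    then show "dc (m # v) = dc v" using br by (simp add: dc_Cons2)
  qed
  have key: "Cons m ` {v \<in> arr (S - {m}). andr v \<and> Suc (dc v) = k} =
     {u \<in> arr S. hd u = m \<and> andr u \<and> Suc (dc u) = k}"
  proof (intro equalityI subsetI)
    fix u assume "u \<in> Cons m ` {v \<in> arr (S - {m}). andr v \<and> Suc (dc v) = k}"
    then obtain v where v: "u = m # v" "distinct v" "set v = S - {m}" "andr v" "Suc (dc v) = k" by auto
    then show "u \<in> {u \<in> arr S. hd u = m \<and> andr u \<and> Suc (dc u) = k}"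
      using gen[OF v(2,3)] mS by auto
  next
    fix u assume u: "u \<in> {u \<in> arr S. hd u = m \<and> andr u \<and> Suc (dc u) = k}"
    then have une: "u \<noteq> []" using Sne by auto
    define v where "v = tl u"
    have uv: "u = m # v" using une u v_def by (cases u) auto
    have dv: "distinct v" "set v = S - {m}" using u uv by auto
    show "u \<in> Cons m ` {v \<in> arr (S - {m}). andr v \<and> Suc (dc v) = k}"
      using dv uv u gen[OF dv] by auto
  qed
  show ?thesis using card_image[OF inj] key m_def by simp
qed

lemma sum_hd:
  assumes "finite B" "B \<noteq> {}"
  shows "card {u \<in> arr B. P u} = (\<Sum>b\<in>B. card {u \<in> arr B. hd u = b \<and> P u})"
proof -
  have e: "{u \<in> arr B. P u} = (\<Union>b\<in>B. {u \<in> arr B. hd u = b \<and> P u})"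
  proof (intro equalityI subsetI)
    fix u assume u: "u \<in> {u \<in> arr B. P u}"
    then have "u \<noteq> []" using assms(2) by auto
    then have "hd u \<in> B" using u hd_in_set by auto
    then show "u \<in> (\<Union>b\<in>B. {u \<in> arr B. hd u = b \<and> P u})" using u by blast
  qed blast
  have f: "finite (arr B)" using finite_arr[OF assms(1)] .
  show ?thesis unfolding e
    by (rule card_UN_disjoint) (use assms(1) f in \<open>auto intro: finite_subset[OF _ f]\<close>)
qed

lemma arr_single: "arr {a} = {[a]}"
proof (intro equalityI subsetI)
  fix u assume "u \<in> arr {a}"
  then have u: "distinct u" "set u = {a}" by auto
  then have "length u = 1" using distinct_card by fastforce
  then obtain x where "u = [x]" by (metis One_nat_def length_0_conv length_Suc_conv)
  then show "u \<in> {[a]}" using u by simp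
qed simp

lemma hr_single: "hr [a] = Node Leaf a Leaf"
  using hr_split[of "[a]" "[]" a "[]"] by simp

lemma core:
  "finite S \<Longrightarrow> a \<in> S \<Longrightarrow>
   card {u \<in> arr S. hd u = a \<and> alt True u \<and> leaf_count (hr u) = k} =
   card {u \<in> arr S. hd u = a \<and> andr u \<and> Suc (dc u) = k}"
proof (induction "card S" arbitrary: S a k rule: less_induct)
  case less
  have IHc: "FU B k' = card {u \<in> arr B. andr u \<and> Suc (dc u) = k'}"
    if B: "finite B" "B \<noteq> {}" "card B < card S" for B k'
  proof -
    have "FU B k' = (\<Sum>b\<in>B. card {u \<in> arr B. hd u = b \<and> (alt True u \<and> leaf_count (hr u) = k')})"
      unfolding FU_def by (rule sum_hd[OF B(1,2)])
    also have "\<dots> = (\<Sum>b\<in>B. card {u \<in> arr B. hd u = b \<and> (andr u \<and> Suc (dc u) = k')})"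
    proof (rule sum.cong[OF refl])
      fix b assume "b \<in> B"
      then show "card {u \<in> arr B. hd u = b \<and> (alt True u \<and> leaf_count (hr u) = k')} =
                 card {u \<in> arr B. hd u = b \<and> (andr u \<and> Suc (dc u) = k')}"
        using less.hyps[OF B(3) B(1)] by simp
    qed
    also have "\<dots> = card {u \<in> arr B. andr u \<and> Suc (dc u) = k'}"
      by (rule sum_hd[OF B(1,2), symmetric])
    finally show ?thesis .
  qed
  have c1: "1 \<le> card S" using less.prems card_0_eq by fastforce
  show ?case
  proof (cases "card S = 1")
    case True
    then have S: "S = {a}" using less.prems by (metis card_1_singletonE singletonD)
    have e1: "{u \<in> arr S. hd u = a \<and> alt True u \<and> leaf_count (hr u) = k} = (if k = 1 then {[a]} else {})"
      unfolding S arr_single by (auto simp: hr_single)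
    have e2: "{u \<in> arr S. hd u = a \<and> andr u \<and> Suc (dc u) = k} = (if k = 1 then {[a]} else {})"
      unfolding S arr_single by auto
    show ?thesis unfolding e1 e2 ..
  next
    case False
    then have c2: "2 \<le> card S" using c1 by simp
    define m where "m = Min S"
    define M where "M = Max S"
    have Sne: "S \<noteq> {}" using less.prems by auto
    have mS: "m \<in> S" "M \<in> S" using less.prems(1) Sne m_def M_def by auto
    have mM: "m \<noteq> M"
    proof
      assume e: "m = M"
      have "S \<subseteq> {m}" using e m_def M_def less.prems(1) by (metis Max_ge Min_le antisym singletonI subsetI)
      then have "card S \<le> card {m}" by (intro card_mono) auto
      then show False using c2 by simp
    qed
    show ?thesis
    proof (cases "a = m")
      case True
      have cS: "card (S - {m}) < card S" using mS less.prems(1) by (meson card_Diff1_less)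
      have ne: "S - {m} \<noteq> {}"
      proof
        assume "S - {m} = {}"
        then have "S \<subseteq> {m}" by auto
        then have "card S \<le> card {m}" by (intro card_mono) auto
        then show False using c2 by simp
      qed
      have "card {u \<in> arr S. hd u = a \<and> alt True u \<and> leaf_count (hr u) = k} =
            card {v \<in> arr (S - {m}). alt False v \<and> leaf_count (hr v) = k}"
        using f_min[OF less.prems(1) c2] True m_def by simp
      also have "\<dots> = FU (S - {m}) k" using FD_FU less.prems(1) by simp
      also have "\<dots> = card {u \<in> arr (S - {m}). andr u \<and> Suc (dc u) = k}"
        using IHc[of "S - {m}" k] less.prems(1) ne cS by simp
      also have "\<dots> = card {u \<in> arr S. hd u = a \<and> andr u \<and> Suc (dc u) = k}"
        using g_min[OF less.prems(1) c2] True m_def by simp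
      finally show ?thesis .
    next
      case False
      have am: "a \<noteq> Min S" using False m_def by simp
      show ?thesis
        unfolding f_decomp[OF less.prems am c2] g_decomp[OF less.prems am c2]
      proof (rule sum.cong[OF refl], rule sum.cong[OF refl])
        fix A k1 assume A: "A \<in> {A. A \<subseteq> S - {Min S, Max S} \<and> a \<in> A}" and k1: "k1 \<in> {..k}"
        have AS: "A \<subseteq> S - {m, M}" "a \<in> A" using A m_def M_def by auto
        have finA: "finite A" using AS(1) less.prems(1) finite_subset by blast
        have cA: "card A < card S"
        proof -
          have "A \<subset> S" using AS(1) mS by blast
          then show ?thesis using less.prems(1) psubset_card_mono by blast
        qed
        have X: "card {L \<in> arr A. hd L = a \<and> alt True L \<and> leaf_count (hr L) = k1} =
                 card {L \<in> arr A. hd L = a \<and> andr L \<and> Suc (dc L) = k1}"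
          using less.hyps[OF cA finA AS(2)] .
        define x where "x = (if even (card A) then Min S else Max S)"
        have xS: "x \<in> S" "x \<notin> A" using x_def mS AS(1) m_def M_def by auto
        define B1 where "B1 = S - A - {x}"
        define B0 where "B0 = S - A - {m}"
        have fB: "finite B1" "finite B0" using less.prems(1) B1_def B0_def by auto
        have AsubS: "A \<subseteq> S" using AS(1) by blast
        have cSA: "card (S - A) = card S - card A" using card_Diff_subset[OF finA AsubS] .
        have "x \<in> S - A" using xS by blast
        then have "card (S - A - {x}) = card (S - A) - 1"
          using less.prems(1) by (simp add: card_Diff_singleton)
        then have cB1: "card B1 = card S - card A - 1" unfolding B1_def cSA .
        have "m \<in> S - A" using mS AS(1) by blast
        then have "card (S - A - {m}) = card (S - A) - 1"
          using less.prems(1) by (simp add: card_Diff_singleton)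
        then have cB0: "card B0 = card S - card A - 1" unfolding B0_def cSA .
        have MB0: "M \<in> B0" using B0_def mS mM AS(1) by auto
        have cB0S: "card B0 < card S" using cB0 c2 by simp
        have Y1: "card {R \<in> arr B1. alt (odd (card A)) R \<and> leaf_count (hr R) = k - k1} = FU B1 (k - k1)"
        proof (cases "odd (card A)")
          case True then show ?thesis unfolding FU_def by simp
        next
          case False then show ?thesis using FD_FU[OF fB(1)] by simp
        qed
        have "FU B1 (k - k1) = FU B0 (k - k1)" using FU_card[OF fB] cB1 cB0 by simp
        also have "\<dots> = card {R \<in> arr B0. andr R \<and> Suc (dc R) = k - k1}"
          using IHc[OF fB(2) _ cB0S] MB0 by blast
        finally have Y: "card {R \<in> arr B1. alt (odd (card A)) R \<and> leaf_count (hr R) = k - k1} =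
            card {R \<in> arr B0. andr R \<and> Suc (dc R) = k - k1}" using Y1 by simp
        show "card {L \<in> arr A. hd L = a \<and> alt True L \<and> leaf_count (hr L) = k1} *
          card {R \<in> arr (S - A - {if even (card A) then Min S else Max S}).
                alt (odd (card A)) R \<and> leaf_count (hr R) = k - k1} =
          card {L \<in> arr A. hd L = a \<and> andr L \<and> Suc (dc L) = k1} *
          card {R \<in> arr (S - A - {Min S}). andr R \<and> Suc (dc R) = k - k1}"
          using X Y unfolding B1_def B0_def x_def m_def by simp
      qed
    qed
  qed
qed

lemma decomp3: "Suc (Suc j) < length p \<Longrightarrow>
  p = take j p @ p ! j # p ! Suc j # p ! Suc (Suc j) # drop (Suc (Suc (Suc j))) p"
  by (simp add: Cons_nth_drop_Suc)

lemma idx_dec: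
  "(\<forall>i\<in>{1..length p - 2}. P (take (i - 1) p) (p ! (i - 1)) (p ! i) (p ! Suc i) (drop (Suc (Suc i)) p))
   \<longleftrightarrow> (\<forall>xs x y z ys. p = xs @ x # y # z # ys \<longrightarrow> P xs x y z ys)"
proof
  assume H: "\<forall>i\<in>{1..length p - 2}. P (take (i - 1) p) (p ! (i - 1)) (p ! i) (p ! Suc i) (drop (Suc (Suc i)) p)"
  show "\<forall>xs x y z ys. p = xs @ x # y # z # ys \<longrightarrow> P xs x y z ys"
  proof (intro allI impI)
    fix xs x y z ys assume p: "p = xs @ x # y # z # ys"
    define i where "i = Suc (length xs)"
    have i: "i \<in> {1..length p - 2}" using p i_def by simp
    have "take (i - 1) p = xs" "p ! (i - 1) = x" "p ! i = y" "p ! Suc i = z" "drop (Suc (Suc i)) p = ys"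
      using p i_def by (simp_all add: nth_append)
    then show "P xs x y z ys" using H i by metis
  qed
next
  assume H: "\<forall>xs x y z ys. p = xs @ x # y # z # ys \<longrightarrow> P xs x y z ys"
  show "\<forall>i\<in>{1..length p - 2}. P (take (i - 1) p) (p ! (i - 1)) (p ! i) (p ! Suc i) (drop (Suc (Suc i)) p)"
  proof
    fix i assume i: "i \<in> {1..length p - 2}"
    then obtain j where j: "i = Suc j" by (cases i) auto
    have "Suc (Suc j) < length p" using i j by auto
    from decomp3[OF this] have "p = take (i - 1) p @ p ! (i - 1) # p ! i # p ! Suc i # drop (Suc (Suc i)) p"
      using j by simp
    then show "P (take (i - 1) p) (p ! (i - 1)) (p ! i) (p ! Suc i) (drop (Suc (Suc i)) p)" using H by blast
  qed
qed

lemma fact_eqs: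
  assumes "1 \<le> i" "Suc i < length p"
  shows "set (fact_w2 p i) = set (takeWhile (\<lambda>v. p ! i < v) (p ! (i - 1) # rev (take (i - 1) p)))"
    "fact_w4 p i = takeWhile (\<lambda>v. p ! i < v) (p ! Suc i # drop (Suc (Suc i)) p)"
proof -
  obtain j where j: "i = Suc j" using assms(1) by (cases i) auto
  have "take i p = take (i - 1) p @ [p ! (i - 1)]" using j assms(2) by (simp add: take_Suc_conv_app_nth)
  then show "set (fact_w2 p i) = set (takeWhile (\<lambda>v. p ! i < v) (p ! (i - 1) # rev (take (i - 1) p)))"
    unfolding fact_w2_def by simp
  have "drop (Suc i) p = p ! Suc i # drop (Suc (Suc i)) p" using assms(2) by (simp add: Cons_nth_drop_Suc)
  then show "fact_w4 p i = takeWhile (\<lambda>v. p ! i < v) (p ! Suc i # drop (Suc (Suc i)) p)"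
    unfolding fact_w4_def by simp
qed

lemma andr_idx:
  assumes n: "length p = Suc n" "1 \<le> n"
  shows "andr p \<longleftrightarrow>
    (\<forall>i \<in> {1..n-1}. \<not> (p ! (i-1) > p ! i \<and> p ! i > p ! Suc i)) \<and>
    p ! (n-1) < p ! n \<and>
    (\<forall>i \<in> {1..n-1}. p ! (i-1) > p ! i \<and> p ! i < p ! Suc i \<longrightarrow>
        Max (set (fact_w2 p i)) < Max (set (fact_w4 p i)))"
proof -
  have l: "length p - 2 = n - 1" using n by simp
  have eqi: "(\<not> (p ! (i-1) > p ! i \<and> p ! i > p ! Suc i)) \<and>
       (p ! (i-1) > p ! i \<and> p ! i < p ! Suc i \<longrightarrow> Max (set (fact_w2 p i)) < Max (set (fact_w4 p i)))
     \<longleftrightarrow> CA (take (i - 1) p) (p ! (i - 1)) (p ! i) (p ! Suc i) (drop (Suc (Suc i)) p)"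
    if i: "i \<in> {1..n-1}" for i
  proof -
    have i1: "1 \<le> i" "Suc i < length p" using i n by auto
    show ?thesis unfolding CA_def fact_eqs[OF i1] by simp
  qed
  have trip: "trip CA p \<longleftrightarrow> (\<forall>i \<in> {1..n-1}. (\<not> (p ! (i-1) > p ! i \<and> p ! i > p ! Suc i)) \<and>
       (p ! (i-1) > p ! i \<and> p ! i < p ! Suc i \<longrightarrow> Max (set (fact_w2 p i)) < Max (set (fact_w4 p i))))"
    unfolding trip_def idx_dec[symmetric, where P = CA] l using eqi by auto
  have la: "lasc p \<longleftrightarrow> p ! (n-1) < p ! n"
  proof -
    have "p \<noteq> []" using n by auto
    then have "last p = p ! n" using n by (simp add: last_conv_nth)
    moreover have "butlast p \<noteq> []" using n by (cases p) auto
    then have "last (butlast p) = p ! (n - 1)" using n by (simp add: last_conv_nth nth_butlast)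
    ultimately show ?thesis unfolding lasc_def by simp
  qed
  show ?thesis unfolding andr_def trip la using n by auto
qed

lemma sp_props:
  assumes "w \<in> signed_perms n"
  shows "distinct (0 # w)" "length w = n"
proof -
  have w: "length w = n" "distinct (map abs w)" "set (map abs w) = {1..int n}"
    using assms unfolding signed_perms_def by auto
  have "0 \<notin> set w"
  proof
    assume "0 \<in> set w"
    then have "abs 0 \<in> set (map abs w)" by (metis image_eqI set_map)
    then show False using w(3) by simp
  qed
  moreover have "distinct w" using w(2) by (simp add: distinct_map)
  ultimately show "distinct (0 # w)" by simp
  show "length w = n" by (fact w(1))
qed

lemma finite_sp: "finite (signed_perms n)"
proof -
  have "signed_perms n \<subseteq> {xs. set xs \<subseteq> {-int n..int n} \<and> length xs = n}"
  proof
    fix w assume w: "w \<in> signed_perms n"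
    have a: "\<forall>x\<in>set w. abs x \<in> {1..int n}" using w unfolding signed_perms_def by auto
    have "set w \<subseteq> {-int n..int n}"
    proof
      fix x assume "x \<in> set w"
      then have "abs x \<le> int n" using a by auto
      then show "x \<in> {-int n..int n}" by (simp add: abs_le_iff)
    qed
    then show "w \<in> {xs. set xs \<subseteq> {-int n..int n} \<and> length xs = n}" using w unfolding signed_perms_def by auto
  qed
  then show ?thesis using finite_lists_length_eq[of "{-int n..int n}" n] finite_subset by blast
qed

lemma fibre:
  assumes "finite X"
  shows "card {x \<in> X. P x} = (\<Sum>y\<in>f ` X. card {x \<in> X. P x \<and> f x = y})"
proof -
  have e: "{x \<in> X. P x} = (\<Union>y\<in>f ` X. {x \<in> X. P x \<and> f x = y})" by blast
  have c: "card (\<Union>y\<in>f ` X. {x \<in> X. P x \<and> f x = y}) = (\<Sum>y\<in>f ` X. card {x \<in> X. P x \<and> f x = y})"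
    by (rule card_UN_disjoint) (use assms in auto)
  show ?thesis by (subst e) (rule c)
qed

lemma fibre_arr:
  assumes S: "S \<in> (\<lambda>w. set (0 # w)) ` signed_perms n"
  shows "card {w \<in> signed_perms n. Q (0 # w) \<and> set (0 # w) = S} = card {u \<in> arr S. hd u = 0 \<and> Q u}"
proof -
  obtain w0 where w0: "w0 \<in> signed_perms n" "S = set (0 # w0)" using S by blast
  have d0: "distinct (0 # w0)" "length w0 = n" using sp_props[OF w0(1)] by auto
  have w0p: "distinct (map abs w0)" "set (map abs w0) = {1..int n}" using w0(1) unfolding signed_perms_def by auto
  have cS: "card S = Suc n" using w0(2) d0 distinct_card by fastforce
  have inj: "inj_on (Cons 0) {w \<in> signed_perms n. Q (0 # w) \<and> set (0 # w) = S}" by simp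
  have "Cons 0 ` {w \<in> signed_perms n. Q (0 # w) \<and> set (0 # w) = S} = {u \<in> arr S. hd u = 0 \<and> Q u}"
  proof (intro equalityI subsetI)
    fix u assume "u \<in> Cons 0 ` {w \<in> signed_perms n. Q (0 # w) \<and> set (0 # w) = S}"
    then obtain w where "u = 0 # w" "w \<in> signed_perms n" "Q (0 # w)" "set (0 # w) = S" by blast
    then show "u \<in> {u \<in> arr S. hd u = 0 \<and> Q u}" using sp_props by auto
  next
    fix u assume u: "u \<in> {u \<in> arr S. hd u = 0 \<and> Q u}"
    then have une: "u \<noteq> []" using w0(2) by auto
    define w where "w = tl u"
    have uw: "u = 0 # w" using une u w_def by (cases u) auto
    have du: "distinct (0 # w)" "set (0 # w) = S" using u uw by auto
    have lw: "length w = n" using du cS distinct_card by fastforce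
    have "insert 0 (set w) = insert 0 (set w0)" using du w0(2) by simp
    moreover have "0 \<notin> set w" "0 \<notin> set w0" using du(1) d0(1) by auto
    ultimately have sw: "set w = set w0" by (metis Diff_insert_absorb)
    have inj0: "inj_on abs (set w0)" using w0p(1) by (simp add: distinct_map)
    have "distinct (map abs w)" using du inj0 sw by (simp add: distinct_map)
    moreover have "set (map abs w) = {1..int n}" using sw w0p(2) by simp
    ultimately have "w \<in> signed_perms n" using lw unfolding signed_perms_def by simp
    then show "u \<in> Cons 0 ` {w \<in> signed_perms n. Q (0 # w) \<and> set (0 # w) = S}"
      using uw u du by auto
  qed
  then show ?thesis using card_image[OF inj] by simp
qed

lemma desB_dc: "desB w = dc (0 # w)"
  unfolding desB_def dc_def by simp

theorem mainTheorem12: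
  fixes n k :: nat
  assumes "n \<ge> 1" and "k \<ge> 1"
  shows "card {w \<in> snakes n. leaf_count (T_pi w) = k} = card {w \<in> andreB n. desB w = k - 1}"
proof -
  define F where "F w = set (0 # w)" for w :: "int list"
  have e1: "{w \<in> snakes n. leaf_count (T_pi w) = k} =
      {w \<in> signed_perms n. (\<lambda>u. alt True u \<and> leaf_count (hr u) = k) (0 # w)}"
  proof -
    have "w \<in> snakes n \<longleftrightarrow> w \<in> signed_perms n \<and> alt True (0 # w)" for w
      unfolding snakes_def alt_def using sp_props(2)[of w n] by auto
    then show ?thesis using T_pi_hr sp_props(1) by auto
  qed
  have e2: "{w \<in> andreB n. desB w = k - 1} =
      {w \<in> signed_perms n. (\<lambda>u. andr u \<and> Suc (dc u) = k) (0 # w)}"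
  proof -
    have "w \<in> andreB n \<longleftrightarrow> w \<in> signed_perms n \<and> andr (0 # w)" for w
    proof (cases "w \<in> signed_perms n")
      case True
      have "length (0 # w) = Suc n" using sp_props(2)[OF True] by simp
      from andr_idx[OF this assms(1)] show ?thesis unfolding andreB_def Let_def using True by simp
    next
      case False then show ?thesis unfolding andreB_def by simp
    qed
    then show ?thesis using desB_dc assms(2) by auto
  qed
  have "card {w \<in> snakes n. leaf_count (T_pi w) = k} =
     (\<Sum>S\<in>F ` signed_perms n. card {w \<in> signed_perms n. (\<lambda>u. alt True u \<and> leaf_count (hr u) = k) (0 # w) \<and> F w = S})"
    unfolding e1 by (rule fibre[OF finite_sp])
  also have "\<dots> = (\<Sum>S\<in>F ` signed_perms n. card {u \<in> arr S. hd u = 0 \<and> (alt True u \<and> leaf_count (hr u) = k)})"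
    unfolding F_def by (rule sum.cong[OF refl]) (rule fibre_arr)
  also have "\<dots> = (\<Sum>S\<in>F ` signed_perms n. card {u \<in> arr S. hd u = 0 \<and> (andr u \<and> Suc (dc u) = k)})"
  proof (rule sum.cong[OF refl])
    fix S assume "S \<in> F ` signed_perms n"
    then have "finite S" "0 \<in> S" unfolding F_def by auto
    then show "card {u \<in> arr S. hd u = 0 \<and> (alt True u \<and> leaf_count (hr u) = k)} =
               card {u \<in> arr S. hd u = 0 \<and> (andr u \<and> Suc (dc u) = k)}"
      using core by simp
  qed
  also have "\<dots> = (\<Sum>S\<in>F ` signed_perms n. card {w \<in> signed_perms n. (\<lambda>u. andr u \<and> Suc (dc u) = k) (0 # w) \<and> F w = S})"
    unfolding F_def by (rule sum.cong[OF refl]) (rule fibre_arr[symmetric])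
  also have "\<dots> = card {w \<in> andreB n. desB w = k - 1}"
    unfolding e2 by (rule fibre[OF finite_sp, symmetric])
  finally show ?thesis .
qed

end
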